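(* Let $(S_n^{(1)},S_n^{(2)})_{n\ge0}$ be a two-elephant walking model with $\alpha_1\alpha_2\ne0$ and $\lambda_\alpha\ne\pm1$. Then for every $n\ge1$, $$x_n=\beta_n(\lambda_\alpha)\Big(x_1+\sum_{j=1}^{n-1}\frac{\gamma_j(\lambda_\alpha)}{\beta_{j+1}(\lambda_\alpha)}\varepsilon^{(x)}_{j+1}\Big),\qquad y_n=\beta_n(-\lambda_\alpha)\Big(y_1+\sum_{j=1}^{n-1}\frac{\gamma_j(-\lambda_\alpha)}{\beta_{j+1}(-\lambda_\alpha)}\varepsilon^{(y)}_{j+1}\Big),$$ and $(\varepsilon^{(x)}_{j+1})_{j\ge1}$, $(\varepsilon^{(y)}_{j+1})_{j\ge1}$ are martingale difference sequences with respect to $(\mathcal F_{j+1})_{j\ge1}$.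
   Context: Two-elephant walking model: fix $p_1,p_2\in[0,1]$, $\alpha_i=2p_i-1$. Let $(\xi_n^{(1)})_{n\ge2}$ be i.i.d. Bernoulli($p_1$), $(\xi_n^{(2)})_{n\ge2}$ i.i.d. Bernoulli($p_2$), $(u_n^{(1)})_{n\ge1}$, $(u_n^{(2)})_{n\ge1}$ independent with $u_n^{(i)}$ uniform on $\{1,\dots,n\}$, all mutually independent. $S_0^{(i)}=0$, $X_1^{(1)},X_1^{(2)}\in\{-1,1\}$ given, and for $n\ge1$: $X_{n+1}^{(1)}:=(2\xi^{(1)}_{n+1}-1)X^{(2)}_{u_n^{(2)}}$, $X_{n+1}^{(2)}:=(2\xi^{(2)}_{n+1}-1)X^{(1)}_{u_n^{(1)}}$, $S_n^{(i)}=\sum_{k\le n}X_k^{(i)}$; $\mathcal F_n:=\sigma(X_j^{(i)}:1\le j\le n,\ i=1,2)$. Notation: $\lambda_\alpha:=\operatorname{sgn}(\alpha_2)\sqrt{\alpha_1\alpha_2}$ if $\alpha_1\alpha_2>0$ and $\lambda_\alpha:=\mathrm i\operatorname{sgn}(\alpha_2)\sqrt{-\alpha_1\alpha_2}$ if $\alpha_1\alpha_2<0$; $r_\alpha:=\sqrt{\alpha_1/\alpha_2}$ if $\alpha_1\alpha_2>0$ and $r_\alpha:=\mathrm i\sqrt{-\alpha_1/\alpha_2}$ if $\alpha_1\alpha_2<0$. For $n\ge1$: $\gamma_n(\pm\lambda_\alpha):=\frac{1\pm\lambda_\alpha}{n+1}$, $\beta_n(\pm\lambda_\alpha):=\prod_{k=1}^{n-1}(1-\gamma_k(\pm\lambda_\alpha))=\frac{\Gamma(n\mp\lambda_\alpha)}{\Gamma(1\mp\lambda_\alpha)\Gamma(n+1)}$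 (with $\beta_1=1$); $x_n:=\frac{S_n^{(1)}-r_\alpha S_n^{(2)}}{n}$, $y_n:=\frac{S_n^{(1)}+r_\alpha S_n^{(2)}}{n}$; and for $j\ge1$ $$\varepsilon^{(x)}_{j+1}:=\frac{1}{1+\lambda_\alpha}\big(X^{(1)}_{j+1}-r_\alpha X^{(2)}_{j+1}+\lambda_\alpha x_j\big),\qquad \varepsilon^{(y)}_{j+1}:=\frac{1}{1-\lambda_\alpha}\big(X^{(1)}_{j+1}+r_\alpha X^{(2)}_{j+1}-\lambda_\alpha y_j\big).$$ *)

theory Defs
  imports "HOL-Probability.Probability"
begin

text \<open>Sign of a Bernoulli step: 2 xi - 1 for xi in {0,1} (xi encoded as bool).\<close>
definition sgnb :: "bool \<Rightarrow> int" where
  "sgnb b = (if b then 1 else -1)"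

text \<open>Pathwise construction of the steps (X^(1)_k, X^(2)_k), k \<ge> 1, from the
  initial steps a = X^(1)_1, b = X^(2)_1, the coins xi^(1)_n, xi^(2)_n (n \<ge> 2) and
  the memory indices u^(1)_n, u^(2)_n (n \<ge> 1):
  X^(1)_{n+1} = (2 xi^(1)_{n+1} - 1) X^(2)_{u^(2)_n},
  X^(2)_{n+1} = (2 xi^(2)_{n+1} - 1) X^(1)_{u^(1)_n}.
  The index u_n is clamped to at most n (which changes nothing when u_n is in {1..n},
  i.e. almost surely); index 0 gives the dummy value (0,0).\<close>
function elephant ::
  "int \<Rightarrow> int \<Rightarrow> (nat \<Rightarrow> bool) \<Rightarrow> (nat \<Rightarrow> bool) \<Rightarrow> (nat \<Rightarrow> nat) \<Rightarrow> (nat \<Rightarrow> nat) \<Rightarrow> nat \<Rightarrow> int \<times> int"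
where
  "elephant a b x1 x2 v1 v2 0 = (0, 0)"
| "elephant a b x1 x2 v1 v2 (Suc 0) = (a, b)"
| "elephant a b x1 x2 v1 v2 (Suc (Suc n)) =
     (sgnb (x1 (Suc (Suc n))) * snd (elephant a b x1 x2 v1 v2 (min (v2 (Suc n)) (Suc n))),
      sgnb (x2 (Suc (Suc n))) * fst (elephant a b x1 x2 v1 v2 (min (v1 (Suc n)) (Suc n))))"
  by pat_completeness auto
termination
  by (relation "Wellfounded.measure (\<lambda>(a, b, x1, x2, v1, v2, n). n)") auto

definition walkX ::
  "int \<Rightarrow> int \<Rightarrow> (nat \<Rightarrow> 'a \<Rightarrow> bool) \<Rightarrow> (nat \<Rightarrow> 'a \<Rightarrow> bool) \<Rightarrow> (nat \<Rightarrow> 'a \<Rightarrow> nat) \<Rightarrow> (nat \<Rightarrow> 'a \<Rightarrow> nat)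
   \<Rightarrow> nat \<Rightarrow> 'a \<Rightarrow> int \<times> int" where
  "walkX a b xi1 xi2 u1 u2 k \<omega> =
     elephant a b (\<lambda>n. xi1 n \<omega>) (\<lambda>n. xi2 n \<omega>) (\<lambda>n. u1 n \<omega>) (\<lambda>n. u2 n \<omega>) k"

datatype src = Xi1 nat | Xi2 nat | U1 nat | U2 nat

definition src_index :: "src set" where
  "src_index = {Xi1 n | n. n \<ge> 2} \<union> {Xi2 n | n. n \<ge> 2} \<union> {U1 n | n. n \<ge> 1} \<union> {U2 n | n. n \<ge> 1}"

definition src_var ::
  "(nat \<Rightarrow> 'a \<Rightarrow> bool) \<Rightarrow> (nat \<Rightarrow> 'a \<Rightarrow> bool) \<Rightarrow> (nat \<Rightarrow> 'a \<Rightarrow> nat) \<Rightarrow> (nat \<Rightarrow> 'a \<Rightarrow> nat)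
   \<Rightarrow> src \<Rightarrow> 'a \<Rightarrow> bool + nat" where
  "src_var xi1 xi2 u1 u2 s = (case s of
      Xi1 n \<Rightarrow> (\<lambda>\<omega>. Inl (xi1 n \<omega>))
    | Xi2 n \<Rightarrow> (\<lambda>\<omega>. Inl (xi2 n \<omega>))
    | U1 n \<Rightarrow> (\<lambda>\<omega>. Inr (u1 n \<omega>))
    | U2 n \<Rightarrow> (\<lambda>\<omega>. Inr (u2 n \<omega>)))"

definition nat_filt :: "'a measure \<Rightarrow> (nat \<Rightarrow> 'a \<Rightarrow> 'b) \<Rightarrow> nat \<Rightarrow> 'a measure" where
  "nat_filt M X n = sigma (space M) (\<Union>j\<in>{1..n}. {X j -` A \<inter> space M | A. True})"

definition lambda_alpha :: "real \<Rightarrow> real \<Rightarrow> complex" where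
  "lambda_alpha a1 a2 =
     (if a1 * a2 > 0 then complex_of_real (sgn a2 * sqrt (a1 * a2))
      else \<i> * complex_of_real (sgn a2 * sqrt (- (a1 * a2))))"

definition r_alpha :: "real \<Rightarrow> real \<Rightarrow> complex" where
  "r_alpha a1 a2 =
     (if a1 * a2 > 0 then complex_of_real (sqrt (a1 / a2))
      else \<i> * complex_of_real (sqrt (- (a1 / a2))))"

definition gam :: "complex \<Rightarrow> nat \<Rightarrow> complex" where
  "gam z n = (1 + z) / (of_nat n + 1)"

definition bet :: "complex \<Rightarrow> nat \<Rightarrow> complex" where
  "bet z n = (\<Prod>k=1..<n. 1 - gam z k)"

definition mds :: "'a measure \<Rightarrow> (nat \<Rightarrow> 'a measure) \<Rightarrow> (nat \<Rightarrow> 'a \<Rightarrow> complex) \<Rightarrow> bool" where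
  "mds M F e \<longleftrightarrow> (\<forall>j\<ge>1.
      e (j+1) \<in> borel_measurable (F (j+1)) \<and> integrable M (e (j+1)) \<and>
      (AE \<omega> in M. real_cond_exp M (F j) (\<lambda>\<omega>. Re (e (j+1) \<omega>)) \<omega> = 0) \<and>
      (AE \<omega> in M. real_cond_exp M (F j) (\<lambda>\<omega>. Im (e (j+1) \<omega>)) \<omega> = 0))"

end

theory Submission
  imports Defs
begin


lemma meas_pair_cs:
  assumes "f \<in> measurable N (count_space (UNIV::'b::countable set))"
      and "g \<in> measurable N (count_space (UNIV::'c::countable set))"
  shows "(\<lambda>x. (f x, g x)) \<in> measurable N (count_space UNIV)"
proof -
  have "(\<lambda>x. (f x, g x)) \<in> measurable N (count_space (UNIV::'b set) \<Otimes>\<^sub>M count_space (UNIV::'c set))"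
    using assms by measurable
  then show ?thesis by (simp add: pair_measure_countable)
qed

lemma meas_cs_comp:
  assumes "f \<in> measurable N (count_space UNIV)"
  shows "(\<lambda>x. h (f x)) \<in> measurable N (count_space UNIV)"
  by (rule measurable_compose[OF assms]) auto

lemma meas_cs_comp_borel:
  assumes "f \<in> measurable N (count_space UNIV)"
  shows "(\<lambda>x. h (f x)) \<in> borel_measurable N"
  by (rule measurable_compose[OF assms]) auto

locale ele = prob_space M for M :: "'a measure" +
  fixes p1 p2 :: real and a b :: int and xi1 xi2 :: "nat \<Rightarrow> 'a \<Rightarrow> bool" and u1 u2 :: "nat \<Rightarrow> 'a \<Rightarrow> nat"
  assumes p: "0 \<le> p1" "p1 \<le> 1" "0 \<le> p2" "p2 \<le> 1"
  and ab: "a \<in> {-1,1}" "b \<in> {-1,1}"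
  and d_xi1: "\<And>n. n \<ge> 2 \<Longrightarrow> distr M (count_space UNIV) (xi1 n) = measure_pmf (bernoulli_pmf p1)"
  and d_xi2: "\<And>n. n \<ge> 2 \<Longrightarrow> distr M (count_space UNIV) (xi2 n) = measure_pmf (bernoulli_pmf p2)"
  and d_u1: "\<And>n. n \<ge> 1 \<Longrightarrow> distr M (count_space UNIV) (u1 n) = measure_pmf (pmf_of_set {1..n})"
  and d_u2: "\<And>n. n \<ge> 1 \<Longrightarrow> distr M (count_space UNIV) (u2 n) = measure_pmf (pmf_of_set {1..n})"
  and ind: "indep_vars (\<lambda>_. count_space UNIV) (src_var xi1 xi2 u1 u2) src_index"
begin

abbreviation "X \<equiv> walkX a b xi1 xi2 u1 u2"
abbreviation "sv \<equiv> src_var xi1 xi2 u1 u2"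

definition E :: "src \<Rightarrow> 'a set set" where
  "E i = {sv i -` A \<inter> space M | A. A \<in> sets (count_space (UNIV :: (bool + nat) set))}"

definition Gm :: "src set \<Rightarrow> 'a measure" where
  "Gm K = sigma (space M) (\<Union>i\<in>K. E i)"

definition Jn :: "nat \<Rightarrow> src set" where
  "Jn n = {Xi1 m | m. 2 \<le> m \<and> m \<le> n} \<union> {Xi2 m | m. 2 \<le> m \<and> m \<le> n}
        \<union> {U1 m | m. 1 \<le> m \<and> m < n} \<union> {U2 m | m. 1 \<le> m \<and> m < n}"

lemma Jn_sub: "Jn n \<subseteq> src_index"
  unfolding Jn_def src_index_def by auto

lemma E_pow: "(\<Union>i\<in>K. E i) \<subseteq> Pow (space M)"
  unfolding E_def by auto

lemma sets_Gm: "sets (Gm K) = sigma_sets (space M) (\<Union>i\<in>K. E i)"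
  unfolding Gm_def using E_pow by (rule sets_measure_of)

lemma space_Gm[simp]: "space (Gm K) = space M"
  unfolding Gm_def using E_pow by (rule space_measure_of)

lemma sv_meas: "i \<in> src_index \<Longrightarrow> sv i \<in> measurable M (count_space UNIV)"
  using ind unfolding indep_vars_def2 by auto

lemma E_sub: "i \<in> src_index \<Longrightarrow> E i \<subseteq> sets M"
  unfolding E_def using sv_meas by (auto intro: measurable_sets)

lemma Gm_sub: "K \<subseteq> src_index \<Longrightarrow> sets (Gm K) \<subseteq> sets M"
  unfolding sets_Gm using E_sub by (intro sets.sigma_sets_subset) auto

lemma Gm_subalg: "K \<subseteq> src_index \<Longrightarrow> subalgebra M (Gm K)"
  unfolding subalgebra_def using Gm_sub by simp

lemma Gm_meas_M: "K \<subseteq> src_index \<Longrightarrow> f \<in> measurable (Gm K) N \<Longrightarrow> f \<in> measurable M N"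
  using Gm_subalg measurable_from_subalg by blast

lemma sv_meas_Gm: "i \<in> K \<Longrightarrow> sv i \<in> measurable (Gm K) (count_space UNIV)"
proof (rule measurableI)
  fix A assume "i \<in> K" "A \<in> sets (count_space (UNIV :: (bool + nat) set))"
  then have "sv i -` A \<inter> space M \<in> (\<Union>i\<in>K. E i)" unfolding E_def by blast
  then show "sv i -` A \<inter> space (Gm K) \<in> sets (Gm K)"
    unfolding sets_Gm by auto
qed auto

lemma xi1_Gm: "Xi1 m \<in> K \<Longrightarrow> xi1 m \<in> measurable (Gm K) (count_space UNIV)"
proof -
  assume "Xi1 m \<in> K"
  from meas_cs_comp[OF sv_meas_Gm[OF this], of projl]
  show ?thesis by (simp add: src_var_def)
qed
lemma xi2_Gm: "Xi2 m \<in> K \<Longrightarrow> xi2 m \<in> measurable (Gm K) (count_space UNIV)"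
proof -
  assume "Xi2 m \<in> K"
  from meas_cs_comp[OF sv_meas_Gm[OF this], of projl]
  show ?thesis by (simp add: src_var_def)
qed
lemma u1_Gm: "U1 m \<in> K \<Longrightarrow> u1 m \<in> measurable (Gm K) (count_space UNIV)"
proof -
  assume "U1 m \<in> K"
  from meas_cs_comp[OF sv_meas_Gm[OF this], of projr]
  show ?thesis by (simp add: src_var_def)
qed
lemma u2_Gm: "U2 m \<in> K \<Longrightarrow> u2 m \<in> measurable (Gm K) (count_space UNIV)"
proof -
  assume "U2 m \<in> K"
  from meas_cs_comp[OF sv_meas_Gm[OF this], of projr]
  show ?thesis by (simp add: src_var_def)
qed

lemma X_SS: "X (Suc (Suc m)) = (\<lambda>\<omega>. (\<lambda>j1 j2 b1 b2. (sgnb b1 * snd (X (min j2 (Suc m)) \<omega>), sgnb b2 * fst (X (min j1 (Suc m)) \<omega>)))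
    (u1 (Suc m) \<omega>) (u2 (Suc m) \<omega>) (xi1 (Suc (Suc m)) \<omega>) (xi2 (Suc (Suc m)) \<omega>))"
  by (auto simp: walkX_def)

lemma X_Gm: "k \<le> n \<Longrightarrow> X k \<in> measurable (Gm (Jn n)) (count_space UNIV)"
proof (induction k rule: less_induct)
  case (less k)
  show ?case
  proof (cases k)
    case 0
    then show ?thesis by (simp add: walkX_def)
  next
    case (Suc k')
    show ?thesis
    proof (cases k')
      case 0
      then show ?thesis using Suc by (simp add: walkX_def)
    next
      case (Suc m)
      have k: "k = Suc (Suc m)" using Suc \<open>k = Suc k'\<close> by simp
      have IH: "\<And>j. j \<le> Suc m \<Longrightarrow> X j \<in> measurable (Gm (Jn n)) (count_space UNIV)"
        using less k by simp
      have mem: "Xi1 (Suc (Suc m)) \<in> Jn n" "Xi2 (Suc (Suc m)) \<in> Jn n" "U1 (Suc m) \<in> Jn n" "U2 (Suc m) \<in> Jn n"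
        using less(2) k unfolding Jn_def by auto
      show ?thesis unfolding k X_SS
        apply (rule measurable_compose_countable[OF _ xi2_Gm[OF mem(2)]])
        apply (rule measurable_compose_countable[OF _ xi1_Gm[OF mem(1)]])
        apply (rule measurable_compose_countable[OF _ u2_Gm[OF mem(4)]])
        apply (rule measurable_compose_countable[OF _ u1_Gm[OF mem(3)]])
        apply (rule meas_pair_cs)
         apply (rule meas_cs_comp[OF IH]; simp)
        apply (rule meas_cs_comp[OF IH]; simp)
        done
    qed
  qed
qed


abbreviation "F \<equiv> nat_filt M X"

lemma Gm_mono: "K \<subseteq> K' \<Longrightarrow> f \<in> measurable (Gm K) N \<Longrightarrow> f \<in> measurable (Gm K') N"
proof -
  assume "K \<subseteq> K'" "f \<in> measurable (Gm K) N"
  moreover have "sets (Gm K) \<subseteq> sets (Gm K')"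
    unfolding sets_Gm using \<open>K \<subseteq> K'\<close> by (intro sigma_sets_mono') auto
  ultimately show ?thesis using measurable_mono[of N N "Gm K" "Gm K'"] by auto
qed

lemma F_pow: "(\<Union>j\<in>{1..n}. {X j -` A \<inter> space M | A. True}) \<subseteq> Pow (space M)"
  by auto

lemma sets_F: "sets (F n) = sigma_sets (space M) (\<Union>j\<in>{1..n}. {X j -` A \<inter> space M | A. True})"
  unfolding nat_filt_def using F_pow by (rule sets_measure_of)

lemma space_F[simp]: "space (F n) = space M"
  unfolding nat_filt_def using F_pow by (rule space_measure_of)

lemma F_Gm: "sets (F n) \<subseteq> sets (Gm (Jn n))"
  unfolding sets_F
proof (rule sigma_algebra.sigma_sets_subset[of "space M", simplified])
  show "sigma_algebra (space M) (sets (Gm (Jn n)))"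
    using sets.sigma_algebra_axioms[of "Gm (Jn n)"] by simp
  show "(\<Union>j\<in>{1..n}. {X j -` A \<inter> space M |A. True}) \<subseteq> sets (Gm (Jn n))"
  proof safe
    fix j A assume "j \<in> {1..n}"
    then have "X j \<in> measurable (Gm (Jn n)) (count_space UNIV)" by (intro X_Gm) auto
    from measurable_sets[OF this, of A] show "X j -` A \<inter> space M \<in> sets (Gm (Jn n))" by simp
  qed
qed

lemma F_subalg: "subalgebra M (F n)"
  using F_Gm Gm_sub[OF Jn_sub] unfolding subalgebra_def by auto

lemma F_meas_M: "f \<in> measurable (F n) N \<Longrightarrow> f \<in> measurable M N"
  using F_subalg measurable_from_subalg by blast

lemma X_F: "1 \<le> j \<Longrightarrow> j \<le> n \<Longrightarrow> X j \<in> measurable (F n) (count_space UNIV)"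
proof (rule measurableI)
  fix A assume "1 \<le> j" "j \<le> n"
  then show "X j -` A \<inter> space (F n) \<in> sets (F n)"
    unfolding sets_F by (intro sigma_sets.Basic UN_I[of j]) auto
qed auto

lemma X_M: "X k \<in> measurable M (count_space UNIV)"
  using Gm_meas_M[OF Jn_sub X_Gm[of k k]] by simp

lemma X_bound: "\<bar>fst (X k \<omega>)\<bar> \<le> 1 \<and> \<bar>snd (X k \<omega>)\<bar> \<le> 1"
proof (induction k rule: less_induct)
  case (less k)
  show ?case
  proof (cases k)
    case 0
    then show ?thesis by (simp add: walkX_def)
  next
    case (Suc k')
    show ?thesis
    proof (cases k')
      case 0
      then show ?thesis using Suc ab by (auto simp add: walkX_def)
    next
      case (Suc m)
      have k: "k = Suc (Suc m)" using Suc \<open>k = Suc k'\<close> by simp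
      have IH: "\<And>j. j \<le> Suc m \<Longrightarrow> \<bar>fst (X j \<omega>)\<bar> \<le> 1 \<and> \<bar>snd (X j \<omega>)\<bar> \<le> 1"
        using less k by simp
      have s: "\<And>c. \<bar>sgnb c\<bar> = 1" by (simp add: sgnb_def)
      show ?thesis unfolding k X_SS
        using IH[of "min (u2 (Suc m) \<omega>) (Suc m)"] IH[of "min (u1 (Suc m) \<omega>) (Suc m)"]
        by (simp add: abs_mult s)
    qed
  qed
qed

lemma X_bound_real: "\<bar>real_of_int (fst (X k \<omega>))\<bar> \<le> 1 \<and> \<bar>real_of_int (snd (X k \<omega>))\<bar> \<le> 1"
proof -
  have "\<bar>real_of_int z\<bar> \<le> 1" if "\<bar>z\<bar> \<le> 1" for z :: int
    using that by linarith
  then show ?thesis using X_bound[of k \<omega>] by blast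
qed

lemma integrable_bdd: "f \<in> borel_measurable M \<Longrightarrow> (\<And>\<omega>. \<bar>f \<omega>\<bar> \<le> B) \<Longrightarrow> integrable M (f :: 'a \<Rightarrow> real)"
  by (rule integrable_const_bound[of _ B]) auto

lemma indep_blocks:
  fixes f g :: "'a \<Rightarrow> real"
  assumes K: "K1 \<subseteq> src_index" "K2 \<subseteq> src_index" "K1 \<inter> K2 = {}"
    and f: "f \<in> borel_measurable (Gm K1)" and g: "g \<in> borel_measurable (Gm K2)"
  shows "indep_var borel f borel g"
  unfolding indep_var_eq
proof (intro conjI)
  show "random_variable borel f" using Gm_meas_M[OF K(1) f] .
  show "random_variable borel g" using Gm_meas_M[OF K(2) g] .
  let ?I = "case_bool K1 K2"
  have i0: "indep_sets (\<lambda>i. {sv i -` A \<inter> space M | A. A \<in> sets (count_space UNIV)}) src_index"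
    using ind unfolding indep_vars_def2 by auto
  have "indep_sets (\<lambda>j. sigma_sets (space M) (\<Union>i\<in>?I j. E i)) UNIV"
  proof (rule indep_sets_collect_sigma)
    show "indep_sets E (\<Union>j\<in>UNIV. ?I j)"
      unfolding E_def[abs_def]
      by (rule indep_sets_mono_index[OF _ i0]) (use K in \<open>auto split: bool.split_asm\<close>)
    show "Int_stable (E i)" for i
      unfolding Int_stable_def E_def
      apply auto
      apply (rule_tac x="A \<inter> Aa" in exI)
      apply auto
      done
    show "disjoint_family_on ?I UNIV"
      using K(3) by (auto simp: disjoint_family_on_def split: bool.split)
  qed
  then have ii: "indep_set (sigma_sets (space M) (\<Union>i\<in>K1. E i)) (sigma_sets (space M) (\<Union>i\<in>K2. E i))"
    unfolding indep_set_def
    by (rule indep_sets_mono_sets) (auto split: bool.split)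
  show "indep_set (sigma_sets (space M) {f -` A \<inter> space M |A. A \<in> sets borel})
     (sigma_sets (space M) {g -` A \<inter> space M |A. A \<in> sets borel})"
    using ii unfolding indep_set_def
  proof (rule indep_sets_mono_sets)
    fix i :: bool
    have f': "{f -` A \<inter> space M |A. A \<in> sets borel} \<subseteq> sigma_sets (space M) (\<Union>i\<in>K1. E i)"
      using measurable_sets[OF f] unfolding sets_Gm by auto
    have g': "{g -` A \<inter> space M |A. A \<in> sets borel} \<subseteq> sigma_sets (space M) (\<Union>i\<in>K2. E i)"
      using measurable_sets[OF g] unfolding sets_Gm by auto
    show "case_bool (sigma_sets (space M) {f -` A \<inter> space M |A. A \<in> sets borel})
            (sigma_sets (space M) {g -` A \<inter> space M |A. A \<in> sets borel}) i
          \<subseteq> case_bool (sigma_sets (space M) (\<Union>i\<in>K1. E i)) (sigma_sets (space M) (\<Union>i\<in>K2. E i)) i"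
      using sigma_sets_mono[OF f'] sigma_sets_mono[OF g'] by (auto split: bool.split)
  qed
qed

lemma xi1_M: "2 \<le> n \<Longrightarrow> xi1 n \<in> measurable M (count_space UNIV)"
  by (rule Gm_meas_M[of "{Xi1 n}"]) (auto simp: src_index_def intro: xi1_Gm)
lemma xi2_M: "2 \<le> n \<Longrightarrow> xi2 n \<in> measurable M (count_space UNIV)"
  by (rule Gm_meas_M[of "{Xi2 n}"]) (auto simp: src_index_def intro: xi2_Gm)
lemma u1_M: "1 \<le> n \<Longrightarrow> u1 n \<in> measurable M (count_space UNIV)"
  by (rule Gm_meas_M[of "{U1 n}"]) (auto simp: src_index_def intro: u1_Gm)
lemma u2_M: "1 \<le> n \<Longrightarrow> u2 n \<in> measurable M (count_space UNIV)"
  by (rule Gm_meas_M[of "{U2 n}"]) (auto simp: src_index_def intro: u2_Gm)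

lemma int_xi1: "2 \<le> n \<Longrightarrow> (\<integral>\<omega>. real_of_int (sgnb (xi1 n \<omega>)) \<partial>M) = 2 * p1 - 1"
proof -
  assume n: "2 \<le> n"
  have "(\<integral>\<omega>. real_of_int (sgnb (xi1 n \<omega>)) \<partial>M) = integral\<^sup>L (distr M (count_space UNIV) (xi1 n)) (\<lambda>c. real_of_int (sgnb c))"
    by (rule integral_distr[symmetric]) (auto intro: xi1_M[OF n])
  also have "\<dots> = 2 * p1 - 1" using d_xi1[OF n] p by (simp add: sgnb_def)
  finally show ?thesis .
qed
lemma int_xi2: "2 \<le> n \<Longrightarrow> (\<integral>\<omega>. real_of_int (sgnb (xi2 n \<omega>)) \<partial>M) = 2 * p2 - 1"
proof -
  assume n: "2 \<le> n"
  have "(\<integral>\<omega>. real_of_int (sgnb (xi2 n \<omega>)) \<partial>M) = integral\<^sup>L (distr M (count_space UNIV) (xi2 n)) (\<lambda>c. real_of_int (sgnb c))"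
    by (rule integral_distr[symmetric]) (auto intro: xi2_M[OF n])
  also have "\<dots> = 2 * p2 - 1" using d_xi2[OF n] p by (simp add: sgnb_def)
  finally show ?thesis .
qed

lemma int_u1: "1 \<le> n \<Longrightarrow> k \<in> {1..n} \<Longrightarrow> (\<integral>\<omega>. (if u1 n \<omega> = k then 1 else 0 :: real) \<partial>M) = 1 / n"
proof -
  assume n: "1 \<le> n" and k: "k \<in> {1..n}"
  have "(\<integral>\<omega>. (if u1 n \<omega> = k then 1 else 0 :: real) \<partial>M) = integral\<^sup>L (distr M (count_space UNIV) (u1 n)) (\<lambda>c. if c = k then 1 else 0 :: real)"
    by (rule integral_distr[symmetric]) (auto intro: u1_M[OF n])
  also have "\<dots> = 1 / n" using d_u1[OF n] n k by (simp add: integral_pmf_of_set)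
  finally show ?thesis .
qed
lemma int_u2: "1 \<le> n \<Longrightarrow> k \<in> {1..n} \<Longrightarrow> (\<integral>\<omega>. (if u2 n \<omega> = k then 1 else 0 :: real) \<partial>M) = 1 / n"
proof -
  assume n: "1 \<le> n" and k: "k \<in> {1..n}"
  have "(\<integral>\<omega>. (if u2 n \<omega> = k then 1 else 0 :: real) \<partial>M) = integral\<^sup>L (distr M (count_space UNIV) (u2 n)) (\<lambda>c. if c = k then 1 else 0 :: real)"
    by (rule integral_distr[symmetric]) (auto intro: u2_M[OF n])
  also have "\<dots> = 1 / n" using d_u2[OF n] n k by (simp add: integral_pmf_of_set)
  finally show ?thesis .
qed

lemma AE_u1: "1 \<le> n \<Longrightarrow> AE \<omega> in M. u1 n \<omega> \<in> {1..n}"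
proof -
  assume n: "1 \<le> n"
  have "AE c in distr M (count_space UNIV) (u1 n). c \<in> {1..n}"
    unfolding d_u1[OF n] AE_measure_pmf_iff using n by simp
  then show ?thesis by (rule AE_distrD[OF u1_M[OF n]])
qed
lemma AE_u2: "1 \<le> n \<Longrightarrow> AE \<omega> in M. u2 n \<omega> \<in> {1..n}"
proof -
  assume n: "1 \<le> n"
  have "AE c in distr M (count_space UNIV) (u2 n). c \<in> {1..n}"
    unfolding d_u2[OF n] AE_measure_pmf_iff using n by simp
  then show ?thesis by (rule AE_distrD[OF u2_M[OF n]])
qed


lemma core1:
  assumes n: "1 \<le> n" and A: "A \<in> sets (F n)"
  shows "(\<integral>\<omega>. indicator A \<omega> * real_of_int (fst (X (Suc n) \<omega>)) \<partial>M)
       = (2 * p1 - 1) / n * (\<Sum>k=1..n. \<integral>\<omega>. indicator A \<omega> * real_of_int (snd (X k \<omega>)) \<partial>M)"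
proof -
  obtain m where nm: "n = Suc m" using n by (cases n) auto
  define s where "s \<omega> = real_of_int (sgnb (xi1 (Suc n) \<omega>))" for \<omega>
  define W where "W k \<omega> = indicator A \<omega> * real_of_int (snd (X k \<omega>))" for k \<omega>
  define U where "U k \<omega> = (if u2 n \<omega> = k then 1 else 0 :: real)" for k \<omega>
  have AG: "A \<in> sets (Gm (Jn n))" using F_Gm A by auto
  have AM: "A \<in> sets M" using F_subalg[of n] A unfolding subalgebra_def by auto
  have W_G: "W k \<in> borel_measurable (Gm (Jn n))" if "k \<le> n" for k
    unfolding W_def using AG X_Gm[OF that]
    by (intro borel_measurable_times borel_measurable_indicator meas_cs_comp_borel) auto
  have U_G: "U k \<in> borel_measurable (Gm {U2 n})" for k
    unfolding U_def by (rule meas_cs_comp_borel[OF u2_Gm]) auto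
  have s_G: "s \<in> borel_measurable (Gm {Xi1 (Suc n)})"
    unfolding s_def by (rule meas_cs_comp_borel[OF xi1_Gm]) auto
  have UW_G: "(\<lambda>\<omega>. U k \<omega> * W k \<omega>) \<in> borel_measurable (Gm (insert (U2 n) (Jn n)))" if "k \<le> n" for k
    by (intro borel_measurable_times Gm_mono[OF _ U_G] Gm_mono[OF _ W_G] that) auto
  have sub1: "{Xi1 (Suc n)} \<subseteq> src_index" "{U2 n} \<subseteq> src_index" "insert (U2 n) (Jn n) \<subseteq> src_index"
    using Jn_sub n by (auto simp: src_index_def)
  have disj: "{Xi1 (Suc n)} \<inter> insert (U2 n) (Jn n) = {}" "{U2 n} \<inter> Jn n = {}"
    by (auto simp: Jn_def)
  have bW: "\<bar>W k \<omega>\<bar> \<le> 1" for k \<omega>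
    using X_bound[of k \<omega>] by (auto simp: W_def indicator_def)
  have bU: "\<bar>U k \<omega>\<bar> \<le> 1" for k \<omega> by (auto simp: U_def)
  have bs: "\<bar>s \<omega>\<bar> \<le> 1" for \<omega> by (auto simp: s_def sgnb_def)
  have W_M: "W k \<in> borel_measurable M" if "k \<le> n" for k
    using Gm_meas_M[OF Jn_sub W_G[OF that]] .
  have U_M: "U k \<in> borel_measurable M" for k
    using Gm_meas_M[OF sub1(2) U_G] .
  have s_M: "s \<in> borel_measurable M"
    using Gm_meas_M[OF sub1(1) s_G] .
  have UW_M: "(\<lambda>\<omega>. U k \<omega> * W k \<omega>) \<in> borel_measurable M" if "k \<le> n" for k
    using Gm_meas_M[OF sub1(3) UW_G[OF that]] .
  have iW: "integrable M (W k)" if "k \<le> n" for k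
    by (rule integrable_bdd[OF W_M[OF that] bW])
  have iU: "integrable M (U k)" for k
    by (rule integrable_bdd[OF U_M bU])
  have iS: "integrable M s"
    by (rule integrable_bdd[OF s_M bs])
  have iUW: "integrable M (\<lambda>\<omega>. U k \<omega> * W k \<omega>)" if "k \<le> n" for k
    by (rule integrable_bdd[OF UW_M[OF that], of 1]) (simp add: abs_mult mult_le_one bU bW)
  have isUW: "integrable M (\<lambda>\<omega>. s \<omega> * (U k \<omega> * W k \<omega>))" if "k \<le> n" for k
    by (rule integrable_bdd[OF borel_measurable_times[OF s_M UW_M[OF that]], of 1])
       (simp add: abs_mult mult_le_one bU bW bs)
  have XS_M: "(\<lambda>\<omega>. indicator A \<omega> * real_of_int (fst (X (Suc n) \<omega>))) \<in> borel_measurable M"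
    using AM X_M[of "Suc n"]
    by (intro borel_measurable_times borel_measurable_indicator meas_cs_comp_borel) auto
  have ae: "AE \<omega> in M. indicator A \<omega> * real_of_int (fst (X (Suc n) \<omega>)) = (\<Sum>k=1..n. s \<omega> * (U k \<omega> * W k \<omega>))"
    using AE_u2[OF n]
  proof eventually_elim
    case (elim \<omega>)
    have f: "fst (X (Suc n) \<omega>) = sgnb (xi1 (Suc n) \<omega>) * snd (X (u2 n \<omega>) \<omega>)"
      using elim by (simp add: nm walkX_def min_def)
    have "(\<Sum>k=1..n. s \<omega> * (U k \<omega> * W k \<omega>)) = (\<Sum>k\<in>{1..n}. if k = u2 n \<omega> then s \<omega> * W k \<omega> else 0)"
      by (rule sum.cong) (auto simp: U_def)
    also have "\<dots> = s \<omega> * W (u2 n \<omega>) \<omega>" using elim by simp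
    finally show ?case using f by (simp add: s_def W_def)
  qed
  have "(\<integral>\<omega>. indicator A \<omega> * real_of_int (fst (X (Suc n) \<omega>)) \<partial>M) = (\<integral>\<omega>. (\<Sum>k=1..n. s \<omega> * (U k \<omega> * W k \<omega>)) \<partial>M)"
    by (rule integral_cong_AE[OF XS_M _ ae])
       (intro borel_measurable_sum borel_measurable_times s_M UW_M; simp)
  also have "\<dots> = (\<Sum>k=1..n. \<integral>\<omega>. s \<omega> * (U k \<omega> * W k \<omega>) \<partial>M)"
    by (rule Bochner_Integration.integral_sum[where f="\<lambda>k \<omega>. s \<omega> * (U k \<omega> * W k \<omega>)"]) (auto intro: isUW)
  also have "\<dots> = (\<Sum>k=1..n. (2 * p1 - 1) * (1 / n * (\<integral>\<omega>. W k \<omega> \<partial>M)))"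
  proof (rule sum.cong[OF refl])
    fix k assume k: "k \<in> {1..n}"
    have i1: "indep_var borel s borel (\<lambda>\<omega>. U k \<omega> * W k \<omega>)"
      by (rule indep_blocks[OF sub1(1) sub1(3) disj(1) s_G UW_G]) (use k in auto)
    have i2: "indep_var borel (U k) borel (W k)"
      by (rule indep_blocks[OF sub1(2) Jn_sub disj(2) U_G W_G]) (use k in auto)
    have "(\<integral>\<omega>. s \<omega> * (U k \<omega> * W k \<omega>) \<partial>M) = (\<integral>\<omega>. s \<omega> \<partial>M) * (\<integral>\<omega>. U k \<omega> * W k \<omega> \<partial>M)"
      by (rule indep_var_lebesgue_integral[OF i1 iS iUW]) (use k in auto)
    also have "(\<integral>\<omega>. U k \<omega> * W k \<omega> \<partial>M) = (\<integral>\<omega>. U k \<omega> \<partial>M) * (\<integral>\<omega>. W k \<omega> \<partial>M)"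
      by (rule indep_var_lebesgue_integral[OF i2 iU iW]) (use k in auto)
    also have "(\<integral>\<omega>. U k \<omega> \<partial>M) = 1 / n" unfolding U_def by (rule int_u2[OF n k])
    also have "(\<integral>\<omega>. s \<omega> \<partial>M) = 2 * p1 - 1" unfolding s_def by (rule int_xi1) (use n in auto)
    finally show "(\<integral>\<omega>. s \<omega> * (U k \<omega> * W k \<omega>) \<partial>M) = (2 * p1 - 1) * (1 / n * (\<integral>\<omega>. W k \<omega> \<partial>M))" .
  qed
  also have "\<dots> = (2 * p1 - 1) / n * (\<Sum>k=1..n. \<integral>\<omega>. indicator A \<omega> * real_of_int (snd (X k \<omega>)) \<partial>M)"
    by (simp add: sum_distrib_left W_def)
  finally show ?thesis .
qed

lemma core2:
  assumes n: "1 \<le> n" and A: "A \<in> sets (F n)"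
  shows "(\<integral>\<omega>. indicator A \<omega> * real_of_int (snd (X (Suc n) \<omega>)) \<partial>M)
       = (2 * p2 - 1) / n * (\<Sum>k=1..n. \<integral>\<omega>. indicator A \<omega> * real_of_int (fst (X k \<omega>)) \<partial>M)"
proof -
  obtain m where nm: "n = Suc m" using n by (cases n) auto
  define s where "s \<omega> = real_of_int (sgnb (xi2 (Suc n) \<omega>))" for \<omega>
  define W where "W k \<omega> = indicator A \<omega> * real_of_int (fst (X k \<omega>))" for k \<omega>
  define U where "U k \<omega> = (if u1 n \<omega> = k then 1 else 0 :: real)" for k \<omega>
  have AG: "A \<in> sets (Gm (Jn n))" using F_Gm A by auto
  have AM: "A \<in> sets M" using F_subalg[of n] A unfolding subalgebra_def by auto
  have W_G: "W k \<in> borel_measurable (Gm (Jn n))" if "k \<le> n" for k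
    unfolding W_def using AG X_Gm[OF that]
    by (intro borel_measurable_times borel_measurable_indicator meas_cs_comp_borel) auto
  have U_G: "U k \<in> borel_measurable (Gm {U1 n})" for k
    unfolding U_def by (rule meas_cs_comp_borel[OF u1_Gm]) auto
  have s_G: "s \<in> borel_measurable (Gm {Xi2 (Suc n)})"
    unfolding s_def by (rule meas_cs_comp_borel[OF xi2_Gm]) auto
  have UW_G: "(\<lambda>\<omega>. U k \<omega> * W k \<omega>) \<in> borel_measurable (Gm (insert (U1 n) (Jn n)))" if "k \<le> n" for k
    by (intro borel_measurable_times Gm_mono[OF _ U_G] Gm_mono[OF _ W_G] that) auto
  have sub1: "{Xi2 (Suc n)} \<subseteq> src_index" "{U1 n} \<subseteq> src_index" "insert (U1 n) (Jn n) \<subseteq> src_index"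
    using Jn_sub n by (auto simp: src_index_def)
  have disj: "{Xi2 (Suc n)} \<inter> insert (U1 n) (Jn n) = {}" "{U1 n} \<inter> Jn n = {}"
    by (auto simp: Jn_def)
  have bW: "\<bar>W k \<omega>\<bar> \<le> 1" for k \<omega>
    using X_bound[of k \<omega>] by (auto simp: W_def indicator_def)
  have bU: "\<bar>U k \<omega>\<bar> \<le> 1" for k \<omega> by (auto simp: U_def)
  have bs: "\<bar>s \<omega>\<bar> \<le> 1" for \<omega> by (auto simp: s_def sgnb_def)
  have W_M: "W k \<in> borel_measurable M" if "k \<le> n" for k
    using Gm_meas_M[OF Jn_sub W_G[OF that]] .
  have U_M: "U k \<in> borel_measurable M" for k
    using Gm_meas_M[OF sub1(2) U_G] .
  have s_M: "s \<in> borel_measurable M"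
    using Gm_meas_M[OF sub1(1) s_G] .
  have UW_M: "(\<lambda>\<omega>. U k \<omega> * W k \<omega>) \<in> borel_measurable M" if "k \<le> n" for k
    using Gm_meas_M[OF sub1(3) UW_G[OF that]] .
  have iW: "integrable M (W k)" if "k \<le> n" for k
    by (rule integrable_bdd[OF W_M[OF that] bW])
  have iU: "integrable M (U k)" for k
    by (rule integrable_bdd[OF U_M bU])
  have iS: "integrable M s"
    by (rule integrable_bdd[OF s_M bs])
  have iUW: "integrable M (\<lambda>\<omega>. U k \<omega> * W k \<omega>)" if "k \<le> n" for k
    by (rule integrable_bdd[OF UW_M[OF that], of 1]) (simp add: abs_mult mult_le_one bU bW)
  have isUW: "integrable M (\<lambda>\<omega>. s \<omega> * (U k \<omega> * W k \<omega>))" if "k \<le> n" for k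
    by (rule integrable_bdd[OF borel_measurable_times[OF s_M UW_M[OF that]], of 1])
       (simp add: abs_mult mult_le_one bU bW bs)
  have XS_M: "(\<lambda>\<omega>. indicator A \<omega> * real_of_int (snd (X (Suc n) \<omega>))) \<in> borel_measurable M"
    using AM X_M[of "Suc n"]
    by (intro borel_measurable_times borel_measurable_indicator meas_cs_comp_borel) auto
  have ae: "AE \<omega> in M. indicator A \<omega> * real_of_int (snd (X (Suc n) \<omega>)) = (\<Sum>k=1..n. s \<omega> * (U k \<omega> * W k \<omega>))"
    using AE_u1[OF n]
  proof eventually_elim
    case (elim \<omega>)
    have f: "snd (X (Suc n) \<omega>) = sgnb (xi2 (Suc n) \<omega>) * fst (X (u1 n \<omega>) \<omega>)"
      using elim by (simp add: nm walkX_def min_def)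
    have "(\<Sum>k=1..n. s \<omega> * (U k \<omega> * W k \<omega>)) = (\<Sum>k\<in>{1..n}. if k = u1 n \<omega> then s \<omega> * W k \<omega> else 0)"
      by (rule sum.cong) (auto simp: U_def)
    also have "\<dots> = s \<omega> * W (u1 n \<omega>) \<omega>" using elim by simp
    finally show ?case using f by (simp add: s_def W_def)
  qed
  have "(\<integral>\<omega>. indicator A \<omega> * real_of_int (snd (X (Suc n) \<omega>)) \<partial>M) = (\<integral>\<omega>. (\<Sum>k=1..n. s \<omega> * (U k \<omega> * W k \<omega>)) \<partial>M)"
    by (rule integral_cong_AE[OF XS_M _ ae])
       (intro borel_measurable_sum borel_measurable_times s_M UW_M; simp)
  also have "\<dots> = (\<Sum>k=1..n. \<integral>\<omega>. s \<omega> * (U k \<omega> * W k \<omega>) \<partial>M)"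
    by (rule Bochner_Integration.integral_sum[where f="\<lambda>k \<omega>. s \<omega> * (U k \<omega> * W k \<omega>)"]) (auto intro: isUW)
  also have "\<dots> = (\<Sum>k=1..n. (2 * p2 - 1) * (1 / n * (\<integral>\<omega>. W k \<omega> \<partial>M)))"
  proof (rule sum.cong[OF refl])
    fix k assume k: "k \<in> {1..n}"
    have i1: "indep_var borel s borel (\<lambda>\<omega>. U k \<omega> * W k \<omega>)"
      by (rule indep_blocks[OF sub1(1) sub1(3) disj(1) s_G UW_G]) (use k in auto)
    have i2: "indep_var borel (U k) borel (W k)"
      by (rule indep_blocks[OF sub1(2) Jn_sub disj(2) U_G W_G]) (use k in auto)
    have "(\<integral>\<omega>. s \<omega> * (U k \<omega> * W k \<omega>) \<partial>M) = (\<integral>\<omega>. s \<omega> \<partial>M) * (\<integral>\<omega>. U k \<omega> * W k \<omega> \<partial>M)"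
      by (rule indep_var_lebesgue_integral[OF i1 iS iUW]) (use k in auto)
    also have "(\<integral>\<omega>. U k \<omega> * W k \<omega> \<partial>M) = (\<integral>\<omega>. U k \<omega> \<partial>M) * (\<integral>\<omega>. W k \<omega> \<partial>M)"
      by (rule indep_var_lebesgue_integral[OF i2 iU iW]) (use k in auto)
    also have "(\<integral>\<omega>. U k \<omega> \<partial>M) = 1 / n" unfolding U_def by (rule int_u1[OF n k])
    also have "(\<integral>\<omega>. s \<omega> \<partial>M) = 2 * p2 - 1" unfolding s_def by (rule int_xi2) (use n in auto)
    finally show "(\<integral>\<omega>. s \<omega> * (U k \<omega> * W k \<omega>) \<partial>M) = (2 * p2 - 1) * (1 / n * (\<integral>\<omega>. W k \<omega> \<partial>M))" .
  qed
  also have "\<dots> = (2 * p2 - 1) / n * (\<Sum>k=1..n. \<integral>\<omega>. indicator A \<omega> * real_of_int (fst (X k \<omega>)) \<partial>M)"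
    by (simp add: sum_distrib_left W_def)
  finally show ?thesis .
qed


lemma zero_int:
  fixes d1 d2 d3 d4 :: real
  assumes n: "1 \<le> n" and A: "A \<in> sets (F n)"
    and c1: "d1 * (2 * p1 - 1) / n + d4 = 0" and c2: "d2 * (2 * p2 - 1) / n + d3 = 0"
  shows "(\<integral>\<omega>. indicator A \<omega> * (d1 * real_of_int (fst (X (Suc n) \<omega>)) + d2 * real_of_int (snd (X (Suc n) \<omega>))
            + d3 * (\<Sum>k=1..n. real_of_int (fst (X k \<omega>))) + d4 * (\<Sum>k=1..n. real_of_int (snd (X k \<omega>)))) \<partial>M) = 0"
proof -
  have AM: "A \<in> sets M" using F_subalg[of n] A unfolding subalgebra_def by auto
  have iF: "integrable M (\<lambda>\<omega>. indicator A \<omega> * real_of_int (fst (X k \<omega>)))" for k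
    by (rule integrable_bdd[of _ 1])
       (use AM X_M[of k] X_bound_real[of k] in \<open>auto intro!: borel_measurable_times borel_measurable_indicator meas_cs_comp_borel simp: indicator_def\<close>)
  have iS: "integrable M (\<lambda>\<omega>. indicator A \<omega> * real_of_int (snd (X k \<omega>)))" for k
    by (rule integrable_bdd[of _ 1])
       (use AM X_M[of k] X_bound_real[of k] in \<open>auto intro!: borel_measurable_times borel_measurable_indicator meas_cs_comp_borel simp: indicator_def\<close>)
  define h1 where "h1 k \<omega> = indicator A \<omega> * real_of_int (fst (X k \<omega>))" for k \<omega>
  define h2 where "h2 k \<omega> = indicator A \<omega> * real_of_int (snd (X k \<omega>))" for k \<omega>
  define I1 where "I1 k = (\<integral>\<omega>. h1 k \<omega> \<partial>M)" for k
  define I2 where "I2 k = (\<integral>\<omega>. h2 k \<omega> \<partial>M)" for k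
  define G1 where "G1 \<omega> = (\<Sum>k=1..n. h1 k \<omega>)" for \<omega>
  define G2 where "G2 \<omega> = (\<Sum>k=1..n. h2 k \<omega>)" for \<omega>
  have ih1: "integrable M (h1 k)" for k unfolding h1_def by (rule iF)
  have ih2: "integrable M (h2 k)" for k unfolding h2_def by (rule iS)
  have iG1: "integrable M G1" unfolding G1_def by (rule Bochner_Integration.integrable_sum[where f=h1]) (rule ih1)
  have iG2: "integrable M G2" unfolding G2_def by (rule Bochner_Integration.integrable_sum[where f=h2]) (rule ih2)
  have IG1: "integral\<^sup>L M G1 = (\<Sum>k=1..n. I1 k)" unfolding G1_def I1_def
    by (rule Bochner_Integration.integral_sum[where f=h1]) (rule ih1)
  have IG2: "integral\<^sup>L M G2 = (\<Sum>k=1..n. I2 k)" unfolding G2_def I2_def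
    by (rule Bochner_Integration.integral_sum[where f=h2]) (rule ih2)
  have eq: "(\<lambda>\<omega>. indicator A \<omega> * (d1 * real_of_int (fst (X (Suc n) \<omega>)) + d2 * real_of_int (snd (X (Suc n) \<omega>))
            + d3 * (\<Sum>k=1..n. real_of_int (fst (X k \<omega>))) + d4 * (\<Sum>k=1..n. real_of_int (snd (X k \<omega>)))))
     = (\<lambda>\<omega>. d1 * h1 (Suc n) \<omega> + d2 * h2 (Suc n) \<omega> + d3 * G1 \<omega> + d4 * G2 \<omega>)"
    unfolding G1_def G2_def h1_def h2_def
    by (rule ext) (simp only: distrib_left sum_distrib_left mult.left_commute)
  have "(\<integral>\<omega>. d1 * h1 (Suc n) \<omega> + d2 * h2 (Suc n) \<omega> + d3 * G1 \<omega> + d4 * G2 \<omega> \<partial>M)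
      = d1 * I1 (Suc n) + d2 * I2 (Suc n) + d3 * (\<Sum>k=1..n. I1 k) + d4 * (\<Sum>k=1..n. I2 k)"
    by (simp add: ih1 ih2 iG1 iG2 IG1 IG2 I1_def I2_def)
  also have "I1 (Suc n) = (2 * p1 - 1) / n * (\<Sum>k=1..n. I2 k)" unfolding I1_def I2_def h1_def h2_def by (rule core1[OF n A])
  also have "I2 (Suc n) = (2 * p2 - 1) / n * (\<Sum>k=1..n. I1 k)" unfolding I1_def I2_def h1_def h2_def by (rule core2[OF n A])
  also have "d1 * ((2 * p1 - 1) / n * (\<Sum>k=1..n. I2 k)) + d2 * ((2 * p2 - 1) / n * (\<Sum>k=1..n. I1 k))
       + d3 * (\<Sum>k=1..n. I1 k) + d4 * (\<Sum>k=1..n. I2 k)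
     = (d1 * (2 * p1 - 1) / n + d4) * (\<Sum>k=1..n. I2 k) + (d2 * (2 * p2 - 1) / n + d3) * (\<Sum>k=1..n. I1 k)"
    by (simp add: algebra_simps)
  also have "\<dots> = 0" using c1 c2 by simp
  finally show ?thesis unfolding eq .
qed


lemma cint_fst: "integrable M (\<lambda>\<omega>. complex_of_int (fst (X k \<omega>)))"
  by (rule integrable_const_bound[of _ 1])
     (use X_M[of k] X_bound_real[of k] in \<open>auto intro!: meas_cs_comp_borel simp: norm_of_int\<close>)
lemma cint_snd: "integrable M (\<lambda>\<omega>. complex_of_int (snd (X k \<omega>)))"
  by (rule integrable_const_bound[of _ 1])
     (use X_M[of k] X_bound_real[of k] in \<open>auto intro!: meas_cs_comp_borel simp: norm_of_int\<close>)

lemma mds_gen: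
  fixes ca cb cc cd :: "nat \<Rightarrow> complex" and e :: "nat \<Rightarrow> 'a \<Rightarrow> complex"
  assumes ca: "\<And>n. n \<ge> 1 \<Longrightarrow> ca n * of_real (2 * p1 - 1) / of_nat n + cd n = 0"
    and cb: "\<And>n. n \<ge> 1 \<Longrightarrow> cb n * of_real (2 * p2 - 1) / of_nat n + cc n = 0"
    and e: "\<And>n \<omega>. n \<ge> 1 \<Longrightarrow> e (Suc n) \<omega> = ca n * of_int (fst (X (Suc n) \<omega>)) + cb n * of_int (snd (X (Suc n) \<omega>))
        + cc n * (\<Sum>k=1..n. of_int (fst (X k \<omega>))) + cd n * (\<Sum>k=1..n. of_int (snd (X k \<omega>)))"
  shows "mds M F e"
  unfolding mds_def
proof (intro allI impI conjI)
  fix j :: nat assume j: "1 \<le> j"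
  define f where "f \<omega> = ca j * of_int (fst (X (Suc j) \<omega>)) + cb j * of_int (snd (X (Suc j) \<omega>))
        + cc j * (\<Sum>k=1..j. of_int (fst (X k \<omega>))) + cd j * (\<Sum>k=1..j. of_int (snd (X k \<omega>)))" for \<omega>
  have ef: "e (j+1) = f" using e[OF j] by (auto simp: f_def)
  have fm: "f \<in> borel_measurable (F (j+1))"
    unfolding f_def
    by (intro borel_measurable_add borel_measurable_times borel_measurable_const borel_measurable_sum
        meas_cs_comp_borel[OF X_F]) (use j in auto)
  show "e (j+1) \<in> borel_measurable (F (j+1))" using fm ef by simp
  show "integrable M (e (j+1))"
    unfolding ef f_def
    by (intro Bochner_Integration.integrable_add integrable_mult_right Bochner_Integration.integrable_sum cint_fst cint_snd)
  interpret fs: finite_measure_subalgebra M "F j"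
    by unfold_locales (rule F_subalg)
  have A0: "(\<integral>\<omega>. indicator A \<omega> * (d1 * real_of_int (fst (X (Suc j) \<omega>)) + d2 * real_of_int (snd (X (Suc j) \<omega>))
            + d3 * (\<Sum>k=1..j. real_of_int (fst (X k \<omega>))) + d4 * (\<Sum>k=1..j. real_of_int (snd (X k \<omega>)))) \<partial>M) = 0"
    if "A \<in> sets (F j)" "d1 * (2 * p1 - 1) / j + d4 = 0" "d2 * (2 * p2 - 1) / j + d3 = 0" for A d1 d2 d3 d4
    by (rule zero_int[OF j that])
  have Re_f: "Re (f \<omega>) = Re (ca j) * real_of_int (fst (X (Suc j) \<omega>)) + Re (cb j) * real_of_int (snd (X (Suc j) \<omega>))
            + Re (cc j) * (\<Sum>k=1..j. real_of_int (fst (X k \<omega>))) + Re (cd j) * (\<Sum>k=1..j. real_of_int (snd (X k \<omega>)))" for \<omega>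
    by (simp add: f_def sum_distrib_left)
  have Im_f: "Im (f \<omega>) = Im (ca j) * real_of_int (fst (X (Suc j) \<omega>)) + Im (cb j) * real_of_int (snd (X (Suc j) \<omega>))
            + Im (cc j) * (\<Sum>k=1..j. real_of_int (fst (X k \<omega>))) + Im (cd j) * (\<Sum>k=1..j. real_of_int (snd (X k \<omega>)))" for \<omega>
    by (simp add: f_def sum_distrib_left)
  have cR1: "Re (ca j) * (2 * p1 - 1) / j + Re (cd j) = 0"
    using arg_cong[OF ca[OF j], of Re] by simp
  have cR2: "Re (cb j) * (2 * p2 - 1) / j + Re (cc j) = 0"
    using arg_cong[OF cb[OF j], of Re] by simp
  have cI1: "Im (ca j) * (2 * p1 - 1) / j + Im (cd j) = 0"
    using arg_cong[OF ca[OF j], of Im] by simp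
  have cI2: "Im (cb j) * (2 * p2 - 1) / j + Im (cc j) = 0"
    using arg_cong[OF cb[OF j], of Im] by simp
  have iE: "integrable M (e (j+1))"
    unfolding ef f_def
    by (intro Bochner_Integration.integrable_add integrable_mult_right Bochner_Integration.integrable_sum cint_fst cint_snd)
  show "AE \<omega> in M. real_cond_exp M (F j) (\<lambda>\<omega>. Re (e (j + 1) \<omega>)) \<omega> = 0"
  proof (rule fs.real_cond_exp_charact)
    fix A assume A: "A \<in> sets (F j)"
    show "(\<integral>\<omega>\<in>A. Re (e (j + 1) \<omega>) \<partial>M) = (\<integral>\<omega>\<in>A. 0 \<partial>M)"
      unfolding set_lebesgue_integral_def ef Re_f using A0[OF A cR1 cR2] by simp
  qed (use iE in auto)
  show "AE \<omega> in M. real_cond_exp M (F j) (\<lambda>\<omega>. Im (e (j + 1) \<omega>)) \<omega> = 0"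
  proof (rule fs.real_cond_exp_charact)
    fix A assume A: "A \<in> sets (F j)"
    show "(\<integral>\<omega>\<in>A. Im (e (j + 1) \<omega>) \<partial>M) = (\<integral>\<omega>\<in>A. 0 \<partial>M)"
      unfolding set_lebesgue_integral_def ef Im_f using A0[OF A cI1 cI2] by simp
  qed (use iE in auto)
qed

end




lemma sqrt_div_aux: "a2 \<noteq> 0 \<Longrightarrow> sqrt (t / a2) = sqrt (t * a2) / \<bar>a2\<bar>"
proof -
  assume a: "a2 \<noteq> 0"
  have "t / a2 = (t * a2) / (a2^2)" using a by (simp add: power2_eq_square field_simps)
  then show ?thesis by (simp add: real_sqrt_divide)
qed

lemma lam_r_real1:
  fixes a1 a2 :: real assumes "a1 * a2 > 0"
  shows "sgn a2 * sqrt (a1 * a2) = sqrt (a1 / a2) * a2"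
    and "sgn a2 * sqrt (a1 * a2) * sqrt (a1 / a2) = a1"
proof -
  have a2: "a2 \<noteq> 0" using assms by auto
  have s: "sqrt (a1 / a2) = sqrt (a1 * a2) / \<bar>a2\<bar>" by (rule sqrt_div_aux[OF a2])
  have ss: "sqrt (a1 * a2) * sqrt (a1 * a2) = a1 * a2" using assms by simp
  show "sgn a2 * sqrt (a1 * a2) = sqrt (a1 / a2) * a2"
    unfolding s using a2 by (cases "a2 > 0") (auto simp: sgn_if)
  show "sgn a2 * sqrt (a1 * a2) * sqrt (a1 / a2) = a1"
    unfolding s using a2 ss by (cases "a2 > 0") (auto simp: sgn_if field_simps)
qed

lemma lam_r_real2:
  fixes a1 a2 :: real assumes "a1 * a2 < 0"
  shows "sgn a2 * sqrt (- (a1 * a2)) = sqrt (- (a1 / a2)) * a2"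
    and "sgn a2 * sqrt (- (a1 * a2)) * sqrt (- (a1 / a2)) = - a1"
proof -
  have a2: "a2 \<noteq> 0" using assms by auto
  have s: "sqrt (- (a1 / a2)) = sqrt (- (a1 * a2)) / \<bar>a2\<bar>" using sqrt_div_aux[OF a2, of "-a1"] by simp
  have ss: "sqrt (- (a1 * a2)) * sqrt (- (a1 * a2)) = - (a1 * a2)" using assms by simp
  show "sgn a2 * sqrt (- (a1 * a2)) = sqrt (- (a1 / a2)) * a2"
    unfolding s using a2 by (cases "a2 > 0") (auto simp: sgn_if)
  show "sgn a2 * sqrt (- (a1 * a2)) * sqrt (- (a1 / a2)) = - a1"
    unfolding s using a2 ss by (cases "a2 > 0") (auto simp: sgn_if field_simps)
qed

lemma lam_r:
  assumes "a1 * a2 \<noteq> 0"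
  shows "lambda_alpha a1 a2 = r_alpha a1 a2 * of_real a2"
    and "lambda_alpha a1 a2 * r_alpha a1 a2 = of_real a1"
proof -
  show "lambda_alpha a1 a2 = r_alpha a1 a2 * of_real a2"
  proof (cases "a1 * a2 > 0")
    case True
    then show ?thesis using lam_r_real1(1)[OF True]
      unfolding lambda_alpha_def r_alpha_def by (simp flip: of_real_mult)
  next
    case False
    then have "a1 * a2 < 0" using assms by linarith
    then show ?thesis using lam_r_real2(1)[of a1 a2] False
      unfolding lambda_alpha_def r_alpha_def by (simp flip: of_real_mult)
  qed
  show "lambda_alpha a1 a2 * r_alpha a1 a2 = of_real a1"
  proof (cases "a1 * a2 > 0")
    case True
    then show ?thesis using lam_r_real1(2)[OF True]
      unfolding lambda_alpha_def r_alpha_def by (simp flip: of_real_mult)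
  next
    case False
    then have n: "a1 * a2 < 0" using assms by linarith
    have "\<i> * complex_of_real (sgn a2 * sqrt (- (a1 * a2))) * (\<i> * complex_of_real (sqrt (- (a1 / a2))))
        = - complex_of_real (sgn a2 * sqrt (- (a1 * a2)) * sqrt (- (a1 / a2)))"
      by (simp add: algebra_simps)
    also have "\<dots> = of_real a1" using lam_r_real2(2)[OF n] by simp
    finally show ?thesis using False
      unfolding lambda_alpha_def r_alpha_def by simp
  qed
qed




lemma lam_norm:
  assumes "\<bar>a1\<bar> \<le> 1" "\<bar>a2\<bar> \<le> 1"
  shows "norm (lambda_alpha a1 a2) \<le> 1"
proof -
  have "\<bar>a1 * a2\<bar> \<le> 1" using assms by (simp add: abs_mult mult_le_one)
  then have "a1 * a2 \<le> 1" "- (a1 * a2) \<le> 1" by (auto simp: abs_le_iff)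
  then have s1: "sqrt (a1 * a2) \<le> 1" and s2: "sqrt (- (a1 * a2)) \<le> 1"
    by simp_all
  have "\<bar>sgn a2\<bar> \<le> 1" by (simp add: sgn_if)
  show ?thesis
  proof (cases "a1 * a2 > 0")
    case True
    have "norm (lambda_alpha a1 a2) = \<bar>sgn a2\<bar> * \<bar>sqrt (a1 * a2)\<bar>"
      using True unfolding lambda_alpha_def norm_of_real by (simp add: abs_mult del: of_real_mult)
    also have "\<dots> \<le> 1" using s1 True \<open>\<bar>sgn a2\<bar> \<le> 1\<close> by (simp add: mult_le_one)
    finally show ?thesis .
  next
    case False
    have "norm (lambda_alpha a1 a2) = \<bar>sgn a2\<bar> * \<bar>sqrt (- (a1 * a2))\<bar>"
      using False unfolding lambda_alpha_def by (simp add: norm_mult abs_mult)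
    also have "\<dots> \<le> 1" using s2 False \<open>\<bar>sgn a2\<bar> \<le> 1\<close> by (simp add: mult_le_one)
    finally show ?thesis .
  qed
qed

lemma gam_nz:
  assumes "norm z \<le> 1" "z \<noteq> 1" "1 \<le> k"
  shows "1 - gam z k \<noteq> 0"
proof
  assume h: "1 - gam z k = 0"
  have k1: "(of_nat k + 1 :: complex) \<noteq> 0"
    by (metis of_nat_Suc of_nat_eq_0_iff add.commute nat.distinct(1))
  have "(1 + z) / (of_nat k + 1) = 1" using h unfolding gam_def by simp
  then have "1 + z = of_nat k + 1" using k1 by (simp add: divide_eq_1_iff)
  then have "z = of_nat k" by simp
  moreover have "k \<noteq> 1" using \<open>z \<noteq> 1\<close> calculation by auto
  ultimately have "norm z \<ge> 2" using \<open>1 \<le> k\<close> by simp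
  then show False using assms by simp
qed




lemma bet_Suc: "1 \<le> n \<Longrightarrow> bet z (Suc n) = bet z n * (1 - gam z n)"
  unfolding bet_def by (simp add: prod.atLeastLessThan_Suc)

lemma bet_nz: "(\<And>k. 1 \<le> k \<Longrightarrow> 1 - gam z k \<noteq> 0) \<Longrightarrow> bet z n \<noteq> 0"
  unfolding bet_def by (auto simp: prod_zero_iff)

lemma recur:
  fixes x e :: "nat \<Rightarrow> complex"
  assumes nz: "\<And>k. 1 \<le> k \<Longrightarrow> 1 - gam z k \<noteq> 0"
    and rec: "\<And>j. 1 \<le> j \<Longrightarrow> x (Suc j) = (1 - gam z j) * x j + gam z j * e (Suc j)"
  shows "1 \<le> n \<Longrightarrow> x n = bet z n * (x 1 + (\<Sum>j=1..n-1. gam z j / bet z (j+1) * e (j+1)))"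
proof (induction n)
  case 0
  then show ?case by simp
next
  case (Suc n)
  show ?case
  proof (cases "n = 0")
    case True
    then show ?thesis by (simp add: bet_def)
  next
    case False
    then have n: "1 \<le> n" by simp
    have IH: "x n = bet z n * (x 1 + (\<Sum>j=1..n-1. gam z j / bet z (j+1) * e (j+1)))"
      using Suc.IH n by simp
    have bS: "bet z (Suc n) = bet z n * (1 - gam z n)" by (rule bet_Suc[OF n])
    have bnz: "bet z (Suc n) \<noteq> 0" by (rule bet_nz[OF nz])
    have sum: "(\<Sum>j=1..Suc n - 1. gam z j / bet z (j+1) * e (j+1))
       = (\<Sum>j=1..n-1. gam z j / bet z (j+1) * e (j+1)) + gam z n / bet z (Suc n) * e (Suc n)"
    proof -
      obtain m where m: "n = Suc m" using n by (cases n) auto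
      show ?thesis unfolding m by (simp add: sum.cl_ivl_Suc)
    qed
    have "x (Suc n) = (1 - gam z n) * x n + gam z n * e (Suc n)" by (rule rec[OF n])
    also have "\<dots> = bet z (Suc n) * (x 1 + (\<Sum>j=1..n-1. gam z j / bet z (j+1) * e (j+1)))
        + gam z n * e (Suc n)" unfolding IH bS by (simp add: algebra_simps)
    also have "\<dots> = bet z (Suc n) * (x 1 + (\<Sum>j=1..Suc n - 1. gam z j / bet z (j+1) * e (j+1)))"
      unfolding sum using bnz by (simp add: field_simps)
    finally show ?thesis .
  qed
qed





lemma rec_alg:
  fixes P w z :: complex and j :: nat
  assumes "1 \<le> j" "1 + z \<noteq> 0"
  shows "(P + w) / of_nat (Suc j) = (1 - (1 + z) / (of_nat j + 1)) * (P / of_nat j) + (1 + z) / (of_nat j + 1) * ((w + z * (P / of_nat j)) / (1 + z))"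
proof -
  have j0: "(of_nat j :: complex) \<noteq> 0" using assms(1) by simp
  have j1: "(of_nat j + 1 :: complex) \<noteq> 0"
    by (metis of_nat_Suc of_nat_eq_0_iff add.commute nat.distinct(1))
  have "(1 + z) / (of_nat j + 1) * ((w + z * (P / of_nat j)) / (1 + z)) = (w + z * (P / of_nat j)) / (of_nat j + 1)"
    using assms(2) by simp
  moreover have "1 - (1 + z) / (of_nat j + 1) = (of_nat j - z) / (of_nat j + 1)"
    using j1 by (simp add: field_simps)
  ultimately have "(1 - (1 + z) / (of_nat j + 1)) * (P / of_nat j) + (1 + z) / (of_nat j + 1) * ((w + z * (P / of_nat j)) / (1 + z))
     = ((of_nat j - z) * (P / of_nat j) + (w + z * (P / of_nat j))) / (of_nat j + 1)"
    by (simp add: add_divide_distrib)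
  also have "(of_nat j - z) * (P / of_nat j) + (w + z * (P / of_nat j)) = P + w"
  proof -
    have "(of_nat j - z) * (P / of_nat j) = P - z * (P / of_nat j)"
      using j0 by (simp add: left_diff_distrib diff_divide_distrib)
    then show ?thesis by simp
  qed
  finally show ?thesis by (simp add: add.commute)
qed

lemma eps_alg:
  fixes u v A B r z :: complex and n :: nat
  assumes "1 \<le> n" "1 + z \<noteq> 0"
  shows "(u + r * v + z * ((A + r * B) / of_nat n)) / (1 + z)
     = 1 / (1 + z) * u + r / (1 + z) * v + z / ((1 + z) * of_nat n) * A + z * r / ((1 + z) * of_nat n) * B"
proof -
  have n0: "(of_nat n :: complex) \<noteq> 0" using assms(1) by simp
  have d: "(1 + z) * of_nat n \<noteq> 0" using n0 assms(2) by simp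
  have "(u + r * v + z * ((A + r * B) / of_nat n)) / (1 + z) = (u * of_nat n + r * v * of_nat n + z * A + z * r * B) / ((1 + z) * of_nat n)"
    using n0 assms(2) by (simp add: field_simps)
  also have "\<dots> = 1 / (1 + z) * u + r / (1 + z) * v + z / ((1 + z) * of_nat n) * A + z * r / ((1 + z) * of_nat n) * B"
    using n0 assms(2) d by (simp add: add_divide_distrib)
  finally show ?thesis .
qed

lemma c_alg:
  fixes c q z :: complex and n :: nat
  assumes "c = z * q" 
  shows "1 / (1 + z) * c / of_nat n + (- z * q / ((1 + z) * of_nat n)) = 0"
  using assms by (simp add: field_simps)




lemma cgen:
  fixes al c be D N :: complex
  assumes "al * c + be = 0"
  shows "al / D * c / N + be / (D * N) = 0"
proof -
  have "al / D * c / N = (al * c) / (D * N)" by simp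
  then have "al / D * c / N + be / (D * N) = (al * c + be) / (D * N)" by (simp add: add_divide_distrib)
  then show ?thesis using assms by simp
qed

lemma part1:
  fixes M :: "'a measure"
    and p1 p2 :: real
    and a b :: int
    and xi1 xi2 :: "nat \<Rightarrow> 'a \<Rightarrow> bool"
    and u1 u2 :: "nat \<Rightarrow> 'a \<Rightarrow> nat"
  defines "al1 \<equiv> 2 * p1 - 1"
    and "al2 \<equiv> 2 * p2 - 1"
  defines "lam \<equiv> lambda_alpha al1 al2"
    and "r \<equiv> r_alpha al1 al2"
  defines "X \<equiv> walkX a b xi1 xi2 u1 u2"
  defines "S1 \<equiv> (\<lambda>n \<omega>. \<Sum>k=1..n. of_int (fst (X k \<omega>)) :: complex)"
    and "S2 \<equiv> (\<lambda>n \<omega>. \<Sum>k=1..n. of_int (snd (X k \<omega>)) :: complex)"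
  defines "x \<equiv> (\<lambda>n \<omega>. (S1 n \<omega> - r * S2 n \<omega>) / of_nat n)"
    and "y \<equiv> (\<lambda>n \<omega>. (S1 n \<omega> + r * S2 n \<omega>) / of_nat n)"
  defines "epsx \<equiv> (\<lambda>m \<omega>. (of_int (fst (X m \<omega>)) - r * of_int (snd (X m \<omega>)) + lam * x (m - 1) \<omega>) / (1 + lam))"
    and "epsy \<equiv> (\<lambda>m \<omega>. (of_int (fst (X m \<omega>)) + r * of_int (snd (X m \<omega>)) - lam * y (m - 1) \<omega>) / (1 - lam))"
  defines "F \<equiv> nat_filt M X"
  assumes "prob_space M"
    and "0 \<le> p1" "p1 \<le> 1" "0 \<le> p2" "p2 \<le> 1"
    and "a \<in> {-1, 1}" "b \<in> {-1, 1}"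
    and "\<And>n. n \<ge> 2 \<Longrightarrow> distr M (count_space UNIV) (xi1 n) = measure_pmf (bernoulli_pmf p1)"
    and "\<And>n. n \<ge> 2 \<Longrightarrow> distr M (count_space UNIV) (xi2 n) = measure_pmf (bernoulli_pmf p2)"
    and "\<And>n. n \<ge> 1 \<Longrightarrow> distr M (count_space UNIV) (u1 n) = measure_pmf (pmf_of_set {1..n})"
    and "\<And>n. n \<ge> 1 \<Longrightarrow> distr M (count_space UNIV) (u2 n) = measure_pmf (pmf_of_set {1..n})"
    and "prob_space.indep_vars M (\<lambda>_. count_space UNIV) (src_var xi1 xi2 u1 u2) src_index"
    and "al1 * al2 \<noteq> 0"
    and "lam \<noteq> 1" "lam \<noteq> -1"
  shows "\<forall>n\<ge>1. \<forall>\<omega>\<in>space M.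
            x n \<omega> = bet lam n * (x 1 \<omega> + (\<Sum>j=1..n-1. gam lam j / bet lam (j+1) * epsx (j+1) \<omega>)) \<and>
            y n \<omega> = bet (-lam) n * (y 1 \<omega> + (\<Sum>j=1..n-1. gam (-lam) j / bet (-lam) (j+1) * epsy (j+1) \<omega>))"
proof -
  have EI: "ele M p1 p2 a b xi1 xi2 u1 u2"
    by (rule ele.intro[OF assms(13)], rule ele_axioms.intro) (use assms(13-24) in auto)
  have al1b: "\<bar>al1\<bar> \<le> 1" unfolding al1_def using assms(14,15) by (simp add: abs_le_iff)
  have al2b: "\<bar>al2\<bar> \<le> 1" unfolding al2_def using assms(16,17) by (simp add: abs_le_iff)
  have nl: "norm lam \<le> 1" unfolding lam_def by (rule lam_norm[OF al1b al2b])
  have nz1: "\<And>k. 1 \<le> k \<Longrightarrow> 1 - gam lam k \<noteq> 0" using gam_nz[OF nl assms(26)] .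
  have ml: "- lam \<noteq> 1" using assms(27) by (auto simp: minus_equation_iff)
  have nz2: "\<And>k. 1 \<le> k \<Longrightarrow> 1 - gam (- lam) k \<noteq> 0" using gam_nz[of "- lam"] nl ml by simp
  have lr1: "lam = r * of_real al2" and lr2: "lam * r = of_real al1"
    unfolding lam_def r_def using lam_r[OF assms(25)] by auto
  have pl: "1 + lam \<noteq> 0" using assms(27) by (auto simp: add_eq_0_iff)
  have pl2: "1 + - lam \<noteq> 0" using assms(26) by auto
  have S1S: "S1 (Suc j) \<omega> = S1 j \<omega> + of_int (fst (X (Suc j) \<omega>))" for j \<omega>
    unfolding S1_def by (simp add: sum.cl_ivl_Suc)
  have S2S: "S2 (Suc j) \<omega> = S2 j \<omega> + of_int (snd (X (Suc j) \<omega>))" for j \<omega>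
    unfolding S2_def by (simp add: sum.cl_ivl_Suc)
  have rec_x: "x (Suc j) \<omega> = (1 - gam lam j) * x j \<omega> + gam lam j * epsx (Suc j) \<omega>" if j: "1 \<le> j" for j \<omega>
  proof -
    have "x (Suc j) \<omega> = ((S1 j \<omega> - r * S2 j \<omega>) + (of_int (fst (X (Suc j) \<omega>)) - r * of_int (snd (X (Suc j) \<omega>)))) / of_nat (Suc j)"
      unfolding x_def S1S S2S by (simp add: algebra_simps)
    also have "\<dots> = (1 - (1 + lam) / (of_nat j + 1)) * ((S1 j \<omega> - r * S2 j \<omega>) / of_nat j)
        + (1 + lam) / (of_nat j + 1) * (((of_int (fst (X (Suc j) \<omega>)) - r * of_int (snd (X (Suc j) \<omega>)))
        + lam * ((S1 j \<omega> - r * S2 j \<omega>) / of_nat j)) / (1 + lam))"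
      by (rule rec_alg[OF j pl])
    also have "\<dots> = (1 - gam lam j) * x j \<omega> + gam lam j * epsx (Suc j) \<omega>"
      unfolding x_def epsx_def gam_def by simp
    finally show ?thesis .
  qed
  have rec_y: "y (Suc j) \<omega> = (1 - gam (- lam) j) * y j \<omega> + gam (- lam) j * epsy (Suc j) \<omega>" if j: "1 \<le> j" for j \<omega>
  proof -
    have "y (Suc j) \<omega> = ((S1 j \<omega> + r * S2 j \<omega>) + (of_int (fst (X (Suc j) \<omega>)) + r * of_int (snd (X (Suc j) \<omega>)))) / of_nat (Suc j)"
      unfolding y_def S1S S2S by (simp add: algebra_simps)
    also have "\<dots> = (1 - (1 + - lam) / (of_nat j + 1)) * ((S1 j \<omega> + r * S2 j \<omega>) / of_nat j)
        + (1 + - lam) / (of_nat j + 1) * (((of_int (fst (X (Suc j) \<omega>)) + r * of_int (snd (X (Suc j) \<omega>)))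
        + - lam * ((S1 j \<omega> + r * S2 j \<omega>) / of_nat j)) / (1 + - lam))"
      by (rule rec_alg[OF j pl2])
    also have "\<dots> = (1 - gam (- lam) j) * y j \<omega> + gam (- lam) j * epsy (Suc j) \<omega>"
      unfolding y_def epsy_def gam_def by simp
    finally show ?thesis .
  qed
  have P1: "\<forall>n\<ge>1. \<forall>\<omega>\<in>space M.
            x n \<omega> = bet lam n * (x 1 \<omega> + (\<Sum>j=1..n-1. gam lam j / bet lam (j+1) * epsx (j+1) \<omega>)) \<and>
            y n \<omega> = bet (-lam) n * (y 1 \<omega> + (\<Sum>j=1..n-1. gam (-lam) j / bet (-lam) (j+1) * epsy (j+1) \<omega>))"
  proof (intro allI impI ballI conjI)
    fix n :: nat and \<omega> :: 'a assume n: "1 \<le> n"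
    show "x n \<omega> = bet lam n * (x 1 \<omega> + (\<Sum>j=1..n-1. gam lam j / bet lam (j+1) * epsx (j+1) \<omega>))"
      by (rule recur[where x="\<lambda>n. x n \<omega>" and e="\<lambda>n. epsx n \<omega>", OF nz1 rec_x n])
    show "y n \<omega> = bet (-lam) n * (y 1 \<omega> + (\<Sum>j=1..n-1. gam (-lam) j / bet (-lam) (j+1) * epsy (j+1) \<omega>))"
      by (rule recur[where x="\<lambda>n. y n \<omega>" and e="\<lambda>n. epsy n \<omega>", OF nz2 rec_y n])
  qed
  show ?thesis by (rule P1)
qed

lemma part2:
  fixes M :: "'a measure"
    and p1 p2 :: real
    and a b :: int
    and xi1 xi2 :: "nat \<Rightarrow> 'a \<Rightarrow> bool"
    and u1 u2 :: "nat \<Rightarrow> 'a \<Rightarrow> nat"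
  defines "al1 \<equiv> 2 * p1 - 1"
    and "al2 \<equiv> 2 * p2 - 1"
  defines "lam \<equiv> lambda_alpha al1 al2"
    and "r \<equiv> r_alpha al1 al2"
  defines "X \<equiv> walkX a b xi1 xi2 u1 u2"
  defines "S1 \<equiv> (\<lambda>n \<omega>. \<Sum>k=1..n. of_int (fst (X k \<omega>)) :: complex)"
    and "S2 \<equiv> (\<lambda>n \<omega>. \<Sum>k=1..n. of_int (snd (X k \<omega>)) :: complex)"
  defines "x \<equiv> (\<lambda>n \<omega>. (S1 n \<omega> - r * S2 n \<omega>) / of_nat n)"
    and "y \<equiv> (\<lambda>n \<omega>. (S1 n \<omega> + r * S2 n \<omega>) / of_nat n)"
  defines "epsx \<equiv> (\<lambda>m \<omega>. (of_int (fst (X m \<omega>)) - r * of_int (snd (X m \<omega>)) + lam * x (m - 1) \<omega>) / (1 + lam))"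
    and "epsy \<equiv> (\<lambda>m \<omega>. (of_int (fst (X m \<omega>)) + r * of_int (snd (X m \<omega>)) - lam * y (m - 1) \<omega>) / (1 - lam))"
  defines "F \<equiv> nat_filt M X"
  assumes "prob_space M"
    and "0 \<le> p1" "p1 \<le> 1" "0 \<le> p2" "p2 \<le> 1"
    and "a \<in> {-1, 1}" "b \<in> {-1, 1}"
    and "\<And>n. n \<ge> 2 \<Longrightarrow> distr M (count_space UNIV) (xi1 n) = measure_pmf (bernoulli_pmf p1)"
    and "\<And>n. n \<ge> 2 \<Longrightarrow> distr M (count_space UNIV) (xi2 n) = measure_pmf (bernoulli_pmf p2)"
    and "\<And>n. n \<ge> 1 \<Longrightarrow> distr M (count_space UNIV) (u1 n) = measure_pmf (pmf_of_set {1..n})"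
    and "\<And>n. n \<ge> 1 \<Longrightarrow> distr M (count_space UNIV) (u2 n) = measure_pmf (pmf_of_set {1..n})"
    and "prob_space.indep_vars M (\<lambda>_. count_space UNIV) (src_var xi1 xi2 u1 u2) src_index"
    and "al1 * al2 \<noteq> 0"
    and "lam \<noteq> 1" "lam \<noteq> -1"
  shows "mds M F epsx"
proof -
  have EI: "ele M p1 p2 a b xi1 xi2 u1 u2"
    by (rule ele.intro[OF assms(13)], rule ele_axioms.intro) (use assms(13-24) in auto)
  have al1b: "\<bar>al1\<bar> \<le> 1" unfolding al1_def using assms(14,15) by (simp add: abs_le_iff)
  have al2b: "\<bar>al2\<bar> \<le> 1" unfolding al2_def using assms(16,17) by (simp add: abs_le_iff)
  have nl: "norm lam \<le> 1" unfolding lam_def by (rule lam_norm[OF al1b al2b])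
  have nz1: "\<And>k. 1 \<le> k \<Longrightarrow> 1 - gam lam k \<noteq> 0" using gam_nz[OF nl assms(26)] .
  have ml: "- lam \<noteq> 1" using assms(27) by (auto simp: minus_equation_iff)
  have nz2: "\<And>k. 1 \<le> k \<Longrightarrow> 1 - gam (- lam) k \<noteq> 0" using gam_nz[of "- lam"] nl ml by simp
  have lr1: "lam = r * of_real al2" and lr2: "lam * r = of_real al1"
    unfolding lam_def r_def using lam_r[OF assms(25)] by auto
  have pl: "1 + lam \<noteq> 0" using assms(27) by (auto simp: add_eq_0_iff)
  have pl2: "1 + - lam \<noteq> 0" using assms(26) by auto
  have S1S: "S1 (Suc j) \<omega> = S1 j \<omega> + of_int (fst (X (Suc j) \<omega>))" for j \<omega>
    unfolding S1_def by (simp add: sum.cl_ivl_Suc)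
  have S2S: "S2 (Suc j) \<omega> = S2 j \<omega> + of_int (snd (X (Suc j) \<omega>))" for j \<omega>
    unfolding S2_def by (simp add: sum.cl_ivl_Suc)
  have rec_x: "x (Suc j) \<omega> = (1 - gam lam j) * x j \<omega> + gam lam j * epsx (Suc j) \<omega>" if j: "1 \<le> j" for j \<omega>
  proof -
    have "x (Suc j) \<omega> = ((S1 j \<omega> - r * S2 j \<omega>) + (of_int (fst (X (Suc j) \<omega>)) - r * of_int (snd (X (Suc j) \<omega>)))) / of_nat (Suc j)"
      unfolding x_def S1S S2S by (simp add: algebra_simps)
    also have "\<dots> = (1 - (1 + lam) / (of_nat j + 1)) * ((S1 j \<omega> - r * S2 j \<omega>) / of_nat j)
        + (1 + lam) / (of_nat j + 1) * (((of_int (fst (X (Suc j) \<omega>)) - r * of_int (snd (X (Suc j) \<omega>)))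
        + lam * ((S1 j \<omega> - r * S2 j \<omega>) / of_nat j)) / (1 + lam))"
      by (rule rec_alg[OF j pl])
    also have "\<dots> = (1 - gam lam j) * x j \<omega> + gam lam j * epsx (Suc j) \<omega>"
      unfolding x_def epsx_def gam_def by simp
    finally show ?thesis .
  qed
  have rec_y: "y (Suc j) \<omega> = (1 - gam (- lam) j) * y j \<omega> + gam (- lam) j * epsy (Suc j) \<omega>" if j: "1 \<le> j" for j \<omega>
  proof -
    have "y (Suc j) \<omega> = ((S1 j \<omega> + r * S2 j \<omega>) + (of_int (fst (X (Suc j) \<omega>)) + r * of_int (snd (X (Suc j) \<omega>)))) / of_nat (Suc j)"
      unfolding y_def S1S S2S by (simp add: algebra_simps)
    also have "\<dots> = (1 - (1 + - lam) / (of_nat j + 1)) * ((S1 j \<omega> + r * S2 j \<omega>) / of_nat j)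
        + (1 + - lam) / (of_nat j + 1) * (((of_int (fst (X (Suc j) \<omega>)) + r * of_int (snd (X (Suc j) \<omega>)))
        + - lam * ((S1 j \<omega> + r * S2 j \<omega>) / of_nat j)) / (1 + - lam))"
      by (rule rec_alg[OF j pl2])
    also have "\<dots> = (1 - gam (- lam) j) * y j \<omega> + gam (- lam) j * epsy (Suc j) \<omega>"
      unfolding y_def epsy_def gam_def by simp
    finally show ?thesis .
  qed
  have FX: "F = nat_filt M (walkX a b xi1 xi2 u1 u2)" unfolding F_def X_def ..
  have P2: "mds M F epsx"
    unfolding FX
  proof (rule ele.mds_gen[OF EI, where ca="\<lambda>n. 1 / (1 + lam)" and cb="\<lambda>n. - r / (1 + lam)"
        and cc="\<lambda>n. lam / ((1 + lam) * of_nat n)" and cd="\<lambda>n. lam * - r / ((1 + lam) * of_nat n)"])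
    fix n :: nat assume n: "1 \<le> n"
    have n0: "(of_nat n :: complex) \<noteq> 0" using n by simp
    show "1 / (1 + lam) * of_real (2 * p1 - 1) / of_nat n + lam * - r / ((1 + lam) * of_nat n) = 0"
      by (rule cgen) (simp add: al1_def[symmetric] lr2[symmetric])
    show "- r / (1 + lam) * of_real (2 * p2 - 1) / of_nat n + lam / ((1 + lam) * of_nat n) = 0"
      by (rule cgen) (simp add: al2_def[symmetric] lr1)
  next
    fix n :: nat and \<omega> assume n: "1 \<le> n"
    have "epsx (Suc n) \<omega> = (of_int (fst (X (Suc n) \<omega>)) + (- r) * of_int (snd (X (Suc n) \<omega>))
        + lam * ((S1 n \<omega> + (- r) * S2 n \<omega>) / of_nat n)) / (1 + lam)"
      unfolding epsx_def x_def by simp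
    also have "\<dots> = 1 / (1 + lam) * of_int (fst (X (Suc n) \<omega>)) + - r / (1 + lam) * of_int (snd (X (Suc n) \<omega>))
        + lam / ((1 + lam) * of_nat n) * S1 n \<omega> + lam * - r / ((1 + lam) * of_nat n) * S2 n \<omega>"
      by (rule eps_alg[OF n pl])
    finally show "epsx (Suc n) \<omega> = 1 / (1 + lam) * of_int (fst (walkX a b xi1 xi2 u1 u2 (Suc n) \<omega>))
        + - r / (1 + lam) * of_int (snd (walkX a b xi1 xi2 u1 u2 (Suc n) \<omega>))
        + lam / ((1 + lam) * of_nat n) * (\<Sum>k = 1..n. of_int (fst (walkX a b xi1 xi2 u1 u2 k \<omega>)))
        + lam * - r / ((1 + lam) * of_nat n) * (\<Sum>k = 1..n. of_int (snd (walkX a b xi1 xi2 u1 u2 k \<omega>)))"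
      unfolding S1_def S2_def X_def .
  qed
  show ?thesis by (rule P2)
qed

lemma part3:
  fixes M :: "'a measure"
    and p1 p2 :: real
    and a b :: int
    and xi1 xi2 :: "nat \<Rightarrow> 'a \<Rightarrow> bool"
    and u1 u2 :: "nat \<Rightarrow> 'a \<Rightarrow> nat"
  defines "al1 \<equiv> 2 * p1 - 1"
    and "al2 \<equiv> 2 * p2 - 1"
  defines "lam \<equiv> lambda_alpha al1 al2"
    and "r \<equiv> r_alpha al1 al2"
  defines "X \<equiv> walkX a b xi1 xi2 u1 u2"
  defines "S1 \<equiv> (\<lambda>n \<omega>. \<Sum>k=1..n. of_int (fst (X k \<omega>)) :: complex)"
    and "S2 \<equiv> (\<lambda>n \<omega>. \<Sum>k=1..n. of_int (snd (X k \<omega>)) :: complex)"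
  defines "x \<equiv> (\<lambda>n \<omega>. (S1 n \<omega> - r * S2 n \<omega>) / of_nat n)"
    and "y \<equiv> (\<lambda>n \<omega>. (S1 n \<omega> + r * S2 n \<omega>) / of_nat n)"
  defines "epsx \<equiv> (\<lambda>m \<omega>. (of_int (fst (X m \<omega>)) - r * of_int (snd (X m \<omega>)) + lam * x (m - 1) \<omega>) / (1 + lam))"
    and "epsy \<equiv> (\<lambda>m \<omega>. (of_int (fst (X m \<omega>)) + r * of_int (snd (X m \<omega>)) - lam * y (m - 1) \<omega>) / (1 - lam))"
  defines "F \<equiv> nat_filt M X"
  assumes "prob_space M"
    and "0 \<le> p1" "p1 \<le> 1" "0 \<le> p2" "p2 \<le> 1"
    and "a \<in> {-1, 1}" "b \<in> {-1, 1}"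
    and "\<And>n. n \<ge> 2 \<Longrightarrow> distr M (count_space UNIV) (xi1 n) = measure_pmf (bernoulli_pmf p1)"
    and "\<And>n. n \<ge> 2 \<Longrightarrow> distr M (count_space UNIV) (xi2 n) = measure_pmf (bernoulli_pmf p2)"
    and "\<And>n. n \<ge> 1 \<Longrightarrow> distr M (count_space UNIV) (u1 n) = measure_pmf (pmf_of_set {1..n})"
    and "\<And>n. n \<ge> 1 \<Longrightarrow> distr M (count_space UNIV) (u2 n) = measure_pmf (pmf_of_set {1..n})"
    and "prob_space.indep_vars M (\<lambda>_. count_space UNIV) (src_var xi1 xi2 u1 u2) src_index"
    and "al1 * al2 \<noteq> 0"
    and "lam \<noteq> 1" "lam \<noteq> -1"
  shows "mds M F epsy"
proof -
  have EI: "ele M p1 p2 a b xi1 xi2 u1 u2"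
    by (rule ele.intro[OF assms(13)], rule ele_axioms.intro) (use assms(13-24) in auto)
  have al1b: "\<bar>al1\<bar> \<le> 1" unfolding al1_def using assms(14,15) by (simp add: abs_le_iff)
  have al2b: "\<bar>al2\<bar> \<le> 1" unfolding al2_def using assms(16,17) by (simp add: abs_le_iff)
  have nl: "norm lam \<le> 1" unfolding lam_def by (rule lam_norm[OF al1b al2b])
  have nz1: "\<And>k. 1 \<le> k \<Longrightarrow> 1 - gam lam k \<noteq> 0" using gam_nz[OF nl assms(26)] .
  have ml: "- lam \<noteq> 1" using assms(27) by (auto simp: minus_equation_iff)
  have nz2: "\<And>k. 1 \<le> k \<Longrightarrow> 1 - gam (- lam) k \<noteq> 0" using gam_nz[of "- lam"] nl ml by simp
  have lr1: "lam = r * of_real al2" and lr2: "lam * r = of_real al1"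
    unfolding lam_def r_def using lam_r[OF assms(25)] by auto
  have pl: "1 + lam \<noteq> 0" using assms(27) by (auto simp: add_eq_0_iff)
  have pl2: "1 + - lam \<noteq> 0" using assms(26) by auto
  have S1S: "S1 (Suc j) \<omega> = S1 j \<omega> + of_int (fst (X (Suc j) \<omega>))" for j \<omega>
    unfolding S1_def by (simp add: sum.cl_ivl_Suc)
  have S2S: "S2 (Suc j) \<omega> = S2 j \<omega> + of_int (snd (X (Suc j) \<omega>))" for j \<omega>
    unfolding S2_def by (simp add: sum.cl_ivl_Suc)
  have rec_x: "x (Suc j) \<omega> = (1 - gam lam j) * x j \<omega> + gam lam j * epsx (Suc j) \<omega>" if j: "1 \<le> j" for j \<omega>
  proof -
    have "x (Suc j) \<omega> = ((S1 j \<omega> - r * S2 j \<omega>) + (of_int (fst (X (Suc j) \<omega>)) - r * of_int (snd (X (Suc j) \<omega>)))) / of_nat (Suc j)"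
      unfolding x_def S1S S2S by (simp add: algebra_simps)
    also have "\<dots> = (1 - (1 + lam) / (of_nat j + 1)) * ((S1 j \<omega> - r * S2 j \<omega>) / of_nat j)
        + (1 + lam) / (of_nat j + 1) * (((of_int (fst (X (Suc j) \<omega>)) - r * of_int (snd (X (Suc j) \<omega>)))
        + lam * ((S1 j \<omega> - r * S2 j \<omega>) / of_nat j)) / (1 + lam))"
      by (rule rec_alg[OF j pl])
    also have "\<dots> = (1 - gam lam j) * x j \<omega> + gam lam j * epsx (Suc j) \<omega>"
      unfolding x_def epsx_def gam_def by simp
    finally show ?thesis .
  qed
  have rec_y: "y (Suc j) \<omega> = (1 - gam (- lam) j) * y j \<omega> + gam (- lam) j * epsy (Suc j) \<omega>" if j: "1 \<le> j" for j \<omega>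
  proof -
    have "y (Suc j) \<omega> = ((S1 j \<omega> + r * S2 j \<omega>) + (of_int (fst (X (Suc j) \<omega>)) + r * of_int (snd (X (Suc j) \<omega>)))) / of_nat (Suc j)"
      unfolding y_def S1S S2S by (simp add: algebra_simps)
    also have "\<dots> = (1 - (1 + - lam) / (of_nat j + 1)) * ((S1 j \<omega> + r * S2 j \<omega>) / of_nat j)
        + (1 + - lam) / (of_nat j + 1) * (((of_int (fst (X (Suc j) \<omega>)) + r * of_int (snd (X (Suc j) \<omega>)))
        + - lam * ((S1 j \<omega> + r * S2 j \<omega>) / of_nat j)) / (1 + - lam))"
      by (rule rec_alg[OF j pl2])
    also have "\<dots> = (1 - gam (- lam) j) * y j \<omega> + gam (- lam) j * epsy (Suc j) \<omega>"
      unfolding y_def epsy_def gam_def by simp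
    finally show ?thesis .
  qed
  have FX: "F = nat_filt M (walkX a b xi1 xi2 u1 u2)" unfolding F_def X_def ..
  have P3: "mds M F epsy"
    unfolding FX
  proof (rule ele.mds_gen[OF EI, where ca="\<lambda>n. 1 / (1 + - lam)" and cb="\<lambda>n. r / (1 + - lam)"
        and cc="\<lambda>n. - lam / ((1 + - lam) * of_nat n)" and cd="\<lambda>n. - lam * r / ((1 + - lam) * of_nat n)"])
    fix n :: nat assume n: "1 \<le> n"
    have n0: "(of_nat n :: complex) \<noteq> 0" using n by simp
    show "1 / (1 + - lam) * of_real (2 * p1 - 1) / of_nat n + - lam * r / ((1 + - lam) * of_nat n) = 0"
      by (rule cgen) (simp add: al1_def[symmetric] lr2[symmetric])
    show "r / (1 + - lam) * of_real (2 * p2 - 1) / of_nat n + - lam / ((1 + - lam) * of_nat n) = 0"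
      by (rule cgen) (simp add: al2_def[symmetric] lr1)
  next
    fix n :: nat and \<omega> assume n: "1 \<le> n"
    have "epsy (Suc n) \<omega> = (of_int (fst (X (Suc n) \<omega>)) + r * of_int (snd (X (Suc n) \<omega>))
        + - lam * ((S1 n \<omega> + r * S2 n \<omega>) / of_nat n)) / (1 + - lam)"
      unfolding epsy_def y_def by simp
    also have "\<dots> = 1 / (1 + - lam) * of_int (fst (X (Suc n) \<omega>)) + r / (1 + - lam) * of_int (snd (X (Suc n) \<omega>))
        + - lam / ((1 + - lam) * of_nat n) * S1 n \<omega> + - lam * r / ((1 + - lam) * of_nat n) * S2 n \<omega>"
      by (rule eps_alg[OF n pl2])
    finally show "epsy (Suc n) \<omega> = 1 / (1 + - lam) * of_int (fst (walkX a b xi1 xi2 u1 u2 (Suc n) \<omega>))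
        + r / (1 + - lam) * of_int (snd (walkX a b xi1 xi2 u1 u2 (Suc n) \<omega>))
        + - lam / ((1 + - lam) * of_nat n) * (\<Sum>k = 1..n. of_int (fst (walkX a b xi1 xi2 u1 u2 k \<omega>)))
        + - lam * r / ((1 + - lam) * of_nat n) * (\<Sum>k = 1..n. of_int (snd (walkX a b xi1 xi2 u1 u2 k \<omega>)))"
      unfolding S1_def S2_def X_def .
  qed
  show ?thesis by (rule P3)
qed

theorem lemma3p1:
  fixes M :: "'a measure"
    and p1 p2 :: real
    and a b :: int
    and xi1 xi2 :: "nat \<Rightarrow> 'a \<Rightarrow> bool"
    and u1 u2 :: "nat \<Rightarrow> 'a \<Rightarrow> nat"
  defines "al1 \<equiv> 2 * p1 - 1"
    and "al2 \<equiv> 2 * p2 - 1"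
  defines "lam \<equiv> lambda_alpha al1 al2"
    and "r \<equiv> r_alpha al1 al2"
  defines "X \<equiv> walkX a b xi1 xi2 u1 u2"
  defines "S1 \<equiv> (\<lambda>n \<omega>. \<Sum>k=1..n. of_int (fst (X k \<omega>)) :: complex)"
    and "S2 \<equiv> (\<lambda>n \<omega>. \<Sum>k=1..n. of_int (snd (X k \<omega>)) :: complex)"
  defines "x \<equiv> (\<lambda>n \<omega>. (S1 n \<omega> - r * S2 n \<omega>) / of_nat n)"
    and "y \<equiv> (\<lambda>n \<omega>. (S1 n \<omega> + r * S2 n \<omega>) / of_nat n)"
  defines "epsx \<equiv> (\<lambda>m \<omega>. (of_int (fst (X m \<omega>)) - r * of_int (snd (X m \<omega>)) + lam * x (m - 1) \<omega>) / (1 + lam))"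
    and "epsy \<equiv> (\<lambda>m \<omega>. (of_int (fst (X m \<omega>)) + r * of_int (snd (X m \<omega>)) - lam * y (m - 1) \<omega>) / (1 - lam))"
  defines "F \<equiv> nat_filt M X"
  assumes "prob_space M"
    and "0 \<le> p1" "p1 \<le> 1" "0 \<le> p2" "p2 \<le> 1"
    and "a \<in> {-1, 1}" "b \<in> {-1, 1}"
    and "\<And>n. n \<ge> 2 \<Longrightarrow> distr M (count_space UNIV) (xi1 n) = measure_pmf (bernoulli_pmf p1)"
    and "\<And>n. n \<ge> 2 \<Longrightarrow> distr M (count_space UNIV) (xi2 n) = measure_pmf (bernoulli_pmf p2)"
    and "\<And>n. n \<ge> 1 \<Longrightarrow> distr M (count_space UNIV) (u1 n) = measure_pmf (pmf_of_set {1..n})"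
    and "\<And>n. n \<ge> 1 \<Longrightarrow> distr M (count_space UNIV) (u2 n) = measure_pmf (pmf_of_set {1..n})"
    and "prob_space.indep_vars M (\<lambda>_. count_space UNIV) (src_var xi1 xi2 u1 u2) src_index"
    and "al1 * al2 \<noteq> 0"
    and "lam \<noteq> 1" "lam \<noteq> -1"
  shows "(\<forall>n\<ge>1. \<forall>\<omega>\<in>space M.
            x n \<omega> = bet lam n * (x 1 \<omega> + (\<Sum>j=1..n-1. gam lam j / bet lam (j+1) * epsx (j+1) \<omega>)) \<and>
            y n \<omega> = bet (-lam) n * (y 1 \<omega> + (\<Sum>j=1..n-1. gam (-lam) j / bet (-lam) (j+1) * epsy (j+1) \<omega>)))
         \<and> mds M F epsx \<and> mds M F epsy"
proof -
  note A = assms(13-27)[unfolded al1_def al2_def lam_def]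
  show ?thesis
    unfolding F_def epsx_def epsy_def x_def y_def S1_def S2_def X_def lam_def r_def al1_def al2_def
    by (intro conjI part1[OF A] part2[OF A] part3[OF A])
qed

end
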